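(* Under the assumptions: $G$ finitely generated sofic with generating set $S$, $(V_n,\sigma_n)$ a sofic approximation, $\{H^\omega\}_{\omega\in\mathcal X^G}$ a continuous operator over $\mathrm{Cay}(G,S)$, with either all $\sigma_n$ homomorphisms or $\{H^\omega\}$ of bounded interaction, and $(\{H^\rho_n\})_n$ an induced approximation of $\{H^\omega\}$: for every continuous $f:\mathbb R\to\mathbb R$, \[\lim_{n\to\infty}\sup_{\rho\in\mathcal X^{V_n}}\left|\frac1{|V_n|}\sum_{v\in V_n}\Big(\langle\delta_v,f(H_n^\rho)\delta_v\rangle-\langle\delta_e,f(H^{\Pi_v^{\sigma_n}(\rho)})\delta_e\rangle\Big)\right|=0.\]
   Context: $G$ finitely generated with fixed finite symmetric generating set $S\subseteq G\setminus\{e\}$; $\mathrm{Cay}(G,S)$: $x\sim y$ iff $y=sx$, edges labeled $yx^{-1}$; $d_S(g,h)=|gh^{-1}|_S$, balls $B_S$. Sofic approximation: $(V_n,\sigma_n)$, $V_n$ finite, $\sigma_n:G\to\mathrm{Sym}(V_n)$ with $|\{v:\sigma_n^g\sigma_n^h(v)=\sigma_n^{gh}(v)\}|/|V_n|\to1$, $|\{v:\sigma_n^g(v)\ne v\}|/|V_n|\to1$ ($g\ne e$). Graph $(V_n,E_n)$, $E_n=\{(v,\sigma_n^s(v))\}$ labeled $s$, metric $d_{E_n}$, balls $B_{E_n}$; $v$ is $R$-good if a label-preserving isomorphism $B_{E_n}(v,R)\to B_S(e,R)$ with $v\mapsto e$ exists (proportion of $R$-good vertices tends to 1). $(\mathcal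 X,d)$ compact metric; shift $(h.\omega)(g)=\omega(gh)$; $\Pi_w^{\sigma_n}(\rho)=(\rho(\sigma_n^g(w)))_g$. $H(x,y)=\langle\delta_x,H\delta_y\rangle$; $f(H)$ is defined by the continuous functional calculus of the self-adjoint operator $H$. Continuous operator with parameter $M$: $\{H^\omega\}$ bounded on $\ell^2(G)$, continuous coefficients, self-adjoint, $H^\omega(x,y)=0$ if $d_S(x,y)>M$, $H^\omega(xg,yg)=H^{g.\omega}(x,y)$; bounded interaction: $\omega_1|_{B_S(e,M)}=\omega_2|_{B_S(e,M)}\Rightarrow H^{\omega_1}(e,x)=H^{\omega_2}(e,x)$. Induced approximation: $\{H_n^\rho\}_{\rho\in\mathcal X^{V_n}}$ on $\ell^2(V_n)$, Borel coefficients, self-adjoint, $H_n^\rho(x,y)=0$ if $d_{E_n}(x,y)>M$, $H_n^\rho(w,v)=H^{\Pi_w^{\sigma_n}(\rho)}(e,g)$ for $4M$-good $w$, $v\in B_{E_n}(w,M)$, unique $g\in B_S(e,M)$ with $\sigma_n^g(w)=v$, and coefficients in $\{H^\omega(x,y)\}\cup\{0\}$. *)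

theory Defs
  imports "HOL-Analysis.Analysis" "HOL-Computational_Algebra.Polynomial"
begin

text \<open>Groups are written additively (type class group_add, not necessarily
commutative): g + h is the group product gh, 0 is e, -g is the inverse.\<close>

definition wlen :: "'g::group_add set \<Rightarrow> 'g \<Rightarrow> nat" where
  "wlen S g = (LEAST n. \<exists>xs. length xs = n \<and> set xs \<subseteq> S \<and> sum_list xs = g)"

definition ballS :: "'g::group_add set \<Rightarrow> nat \<Rightarrow> 'g set" where
  "ballS S R = {g. wlen S g \<le> R}"

definition generates :: "'g::group_add set \<Rightarrow> bool" where
  "generates S \<longleftrightarrow> (\<forall>g. \<exists>xs. set xs \<subseteq> S \<and> sum_list xs = g)"

definition sofic_approx :: "(nat \<Rightarrow> 'v set) \<Rightarrow> (nat \<Rightarrow> 'g::group_add \<Rightarrow> 'v \<Rightarrow> 'v) \<Rightarrow> bool" where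
  "sofic_approx V \<sigma> \<longleftrightarrow>
     (\<forall>n. finite (V n)) \<and> (\<forall>n g. bij_betw (\<sigma> n g) (V n) (V n)) \<and>
     (\<forall>g h. (\<lambda>n. real (card {v\<in>V n. \<sigma> n g (\<sigma> n h v) = \<sigma> n (g + h) v}) / real (card (V n)))
              \<longlonglongrightarrow> 1) \<and>
     (\<forall>g. g \<noteq> 0 \<longrightarrow> (\<lambda>n. real (card {v\<in>V n. \<sigma> n g v \<noteq> v}) / real (card (V n))) \<longlonglongrightarrow> 1)"

text \<open>Graph distance in (V_n, E_n), E_n = {(v, sigma_n^s v)}: d(x,y) <= R,
  walks may use edges in either direction.\<close>
definition dE_le :: "'g set \<Rightarrow> (nat \<Rightarrow> 'v set) \<Rightarrow> (nat \<Rightarrow> 'g \<Rightarrow> 'v \<Rightarrow> 'v) \<Rightarrow> nat \<Rightarrow> 'v \<Rightarrow> 'v \<Rightarrow> nat \<Rightarrow> bool" where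
  "dE_le S V \<sigma> n x y R \<longleftrightarrow>
     (\<exists>p k. k \<le> R \<and> p 0 = x \<and> p k = y \<and> (\<forall>i\<le>k. p i \<in> V n) \<and>
        (\<forall>i<k. \<exists>s\<in>S. p (Suc i) = \<sigma> n s (p i) \<or> p i = \<sigma> n s (p (Suc i))))"

definition ballE :: "'g set \<Rightarrow> (nat \<Rightarrow> 'v set) \<Rightarrow> (nat \<Rightarrow> 'g \<Rightarrow> 'v \<Rightarrow> 'v) \<Rightarrow> nat \<Rightarrow> 'v \<Rightarrow> nat \<Rightarrow> 'v set" where
  "ballE S V \<sigma> n w R = {u \<in> V n. dE_le S V \<sigma> n w u R}"

definition good :: "'g::group_add set \<Rightarrow> (nat \<Rightarrow> 'v set) \<Rightarrow> (nat \<Rightarrow> 'g \<Rightarrow> 'v \<Rightarrow> 'v) \<Rightarrow> nat \<Rightarrow> nat \<Rightarrow> 'v \<Rightarrow> bool" where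
  "good S V \<sigma> n R v \<longleftrightarrow> v \<in> V n \<and>
     (\<exists>\<phi>. bij_betw \<phi> (ballE S V \<sigma> n v R) (ballS S R) \<and> \<phi> v = 0 \<and>
        (\<forall>x\<in>ballE S V \<sigma> n v R. \<forall>y\<in>ballE S V \<sigma> n v R. \<forall>s\<in>S.
            y = \<sigma> n s x \<longleftrightarrow> \<phi> y = s + \<phi> x))"

definition Pi_sh :: "(nat \<Rightarrow> 'g \<Rightarrow> 'v \<Rightarrow> 'v) \<Rightarrow> nat \<Rightarrow> 'v \<Rightarrow> ('v \<Rightarrow> 'x) \<Rightarrow> 'g \<Rightarrow> 'x" where
  "Pi_sh \<sigma> n w \<rho> = (\<lambda>g. \<rho> (\<sigma> n g w))"

definition shift :: "'g::group_add \<Rightarrow> ('g \<Rightarrow> 'x) \<Rightarrow> 'g \<Rightarrow> 'x" where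
  "shift h \<omega> = (\<lambda>g. \<omega> (g + h))"

text \<open>Matrices A x y = <delta_x, A delta_y> indexed by a set I (I = UNIV for l2(G)).\<close>
definition mvec :: "'a set \<Rightarrow> ('a \<Rightarrow> 'a \<Rightarrow> complex) \<Rightarrow> ('a \<Rightarrow> complex) \<Rightarrow> 'a \<Rightarrow> complex" where
  "mvec I A v x = (\<Sum>\<^sub>\<infinity>y\<in>I. A x y * v y)"

definition bounded_op :: "'a set \<Rightarrow> ('a \<Rightarrow> 'a \<Rightarrow> complex) \<Rightarrow> bool" where
  "bounded_op I A \<longleftrightarrow> (\<exists>C\<ge>0. \<forall>v. finite {x\<in>I. v x \<noteq> 0} \<longrightarrow>
     ((\<lambda>x. (cmod (mvec I A v x))\<^sup>2) summable_on I) \<and>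
     (\<Sum>\<^sub>\<infinity>x\<in>I. (cmod (mvec I A v x))\<^sup>2) \<le> C\<^sup>2 * (\<Sum>x\<in>{x\<in>I. v x \<noteq> 0}. (cmod (v x))\<^sup>2))"

definition mmult :: "'a set \<Rightarrow> ('a \<Rightarrow> 'a \<Rightarrow> complex) \<Rightarrow> ('a \<Rightarrow> 'a \<Rightarrow> complex) \<Rightarrow> 'a \<Rightarrow> 'a \<Rightarrow> complex" where
  "mmult I A B x y = (\<Sum>\<^sub>\<infinity>z\<in>I. A x z * B z y)"

fun mpow :: "'a set \<Rightarrow> ('a \<Rightarrow> 'a \<Rightarrow> complex) \<Rightarrow> nat \<Rightarrow> 'a \<Rightarrow> 'a \<Rightarrow> complex" where
  "mpow I A 0 = (\<lambda>x y. if x = y then 1 else 0)"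
| "mpow I A (Suc k) = mmult I A (mpow I A k)"

definition polymat :: "'a set \<Rightarrow> ('a \<Rightarrow> 'a \<Rightarrow> complex) \<Rightarrow> real poly \<Rightarrow> 'a \<Rightarrow> 'a \<Rightarrow> complex" where
  "polymat I A p x y = (\<Sum>i\<le>degree p. complex_of_real (coeff p i) * mpow I A i x y)"

text \<open>Continuous functional calculus, matrix entry <delta_x, f(A) delta_y>:
  limit of p_k(A) for polynomials p_k converging to f uniformly on compacts
  (in particular on [-norm A, norm A], which contains the spectrum).\<close>
definition fcalc :: "'a set \<Rightarrow> ('a \<Rightarrow> 'a \<Rightarrow> complex) \<Rightarrow> (real \<Rightarrow> real) \<Rightarrow> 'a \<Rightarrow> 'a \<Rightarrow> complex" where
  "fcalc I A f x y = (THE c. \<forall>ps :: nat \<Rightarrow> real poly.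
      (\<forall>r. uniform_limit {-r..r} (\<lambda>k t. poly (ps k) t) f sequentially) \<longrightarrow>
      (\<lambda>k. polymat I A (ps k) x y) \<longlonglongrightarrow> c)"

definition continuous_operator ::
  "'g::group_add set \<Rightarrow> nat \<Rightarrow> (('g \<Rightarrow> 'x::topological_space) \<Rightarrow> 'g \<Rightarrow> 'g \<Rightarrow> complex) \<Rightarrow> bool" where
  "continuous_operator S M H \<longleftrightarrow>
     (\<forall>\<omega>. bounded_op UNIV (H \<omega>)) \<and>
     (\<forall>x y. continuous_on UNIV (\<lambda>\<omega>. H \<omega> x y)) \<and>
     (\<forall>\<omega> x y. H \<omega> x y = cnj (H \<omega> y x)) \<and>
     (\<forall>\<omega> x y. wlen S (x - y) > M \<longrightarrow> H \<omega> x y = 0) \<and>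
     (\<forall>\<omega> x y g. H \<omega> (x + g) (y + g) = H (shift g \<omega>) x y)"

definition bounded_interaction ::
  "'g::group_add set \<Rightarrow> nat \<Rightarrow> (('g \<Rightarrow> 'x) \<Rightarrow> 'g \<Rightarrow> 'g \<Rightarrow> complex) \<Rightarrow> bool" where
  "bounded_interaction S M H \<longleftrightarrow>
     (\<forall>\<omega>1 \<omega>2. (\<forall>g\<in>ballS S M. \<omega>1 g = \<omega>2 g) \<longrightarrow> (\<forall>x. H \<omega>1 0 x = H \<omega>2 0 x))"

definition induced_approx ::
  "'g::group_add set \<Rightarrow> (nat \<Rightarrow> 'v set) \<Rightarrow> (nat \<Rightarrow> 'g \<Rightarrow> 'v \<Rightarrow> 'v) \<Rightarrow> nat \<Rightarrow>
   (('g \<Rightarrow> 'x::topological_space) \<Rightarrow> 'g \<Rightarrow> 'g \<Rightarrow> complex) \<Rightarrow>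
   (nat \<Rightarrow> ('v \<Rightarrow> 'x) \<Rightarrow> 'v \<Rightarrow> 'v \<Rightarrow> complex) \<Rightarrow> bool" where
  "induced_approx S V \<sigma> M H Hn \<longleftrightarrow> (\<forall>n.
     (\<forall>x y. (\<lambda>\<rho>. Hn n \<rho> x y) \<in> borel_measurable (PiM (V n) (\<lambda>_. borel))) \<and>
     (\<forall>\<rho>\<in>PiE (V n) (\<lambda>_. UNIV).
        (\<forall>x\<in>V n. \<forall>y\<in>V n. Hn n \<rho> x y = cnj (Hn n \<rho> y x)) \<and>
        (\<forall>x\<in>V n. \<forall>y\<in>V n. \<not> dE_le S V \<sigma> n x y M \<longrightarrow> Hn n \<rho> x y = 0) \<and>
        (\<forall>w v g. good S V \<sigma> n (4 * M) w \<and> v \<in> ballE S V \<sigma> n w M \<and> g \<in> ballS S M \<and>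
             \<sigma> n g w = v \<longrightarrow> Hn n \<rho> w v = H (Pi_sh \<sigma> n w \<rho>) 0 g) \<and>
        (\<forall>x\<in>V n. \<forall>y\<in>V n. Hn n \<rho> x y \<in> {H \<omega> a b | \<omega> a b. True} \<union> {0})))"

end

theory Submission
  imports Defs "HOL-Library.Function_Algebras" "HOL-Computational_Algebra.Fundamental_Theorem_Algebra"
begin


definition fmul :: "'a set \<Rightarrow> ('a\<Rightarrow>'a\<Rightarrow>complex) \<Rightarrow> ('a\<Rightarrow>'a\<Rightarrow>complex) \<Rightarrow> 'a\<Rightarrow>'a\<Rightarrow>complex" where
  "fmul J A B x y = (\<Sum>z\<in>J. A x z * B z y)"

definition cpm :: "'a set \<Rightarrow> ('a\<Rightarrow>'a\<Rightarrow>complex) \<Rightarrow> complex poly \<Rightarrow> 'a\<Rightarrow>'a\<Rightarrow>complex" where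
  "cpm J A p x y = (\<Sum>i\<le>degree p. coeff p i * mpow J A i x y)"

definition dl :: "'a \<Rightarrow> 'a \<Rightarrow> complex" where "dl x y = (if x = y then 1 else 0)"

lemma mpow_Suc_f: "finite J \<Longrightarrow> mpow J A (Suc k) x y = fmul J A (mpow J A k) x y"
  by (simp add: mmult_def fmul_def)

lemma mpow_0_dl: "mpow J A 0 x y = dl x y" by (simp add: dl_def)

lemma fmul_assoc: "fmul J (fmul J A B) C x y = fmul J A (fmul J B C) x y"
  unfolding fmul_def sum_distrib_left sum_distrib_right
  by (subst sum.swap) (simp add: mult.assoc)

lemma fmul_dl_left: "x \<in> J \<Longrightarrow> finite J \<Longrightarrow> fmul J dl B x y = B x y"
proof -
  assume "x \<in> J" "finite J"
  have "fmul J dl B x y = (\<Sum>z\<in>J. if x = z then B z y else 0)"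
    unfolding fmul_def dl_def by (rule sum.cong) auto
  then show ?thesis using \<open>x \<in> J\<close> \<open>finite J\<close> by simp
qed

lemma fmul_dl_right: "y \<in> J \<Longrightarrow> finite J \<Longrightarrow> fmul J A dl x y = A x y"
proof -
  assume "y \<in> J" "finite J"
  have "fmul J A dl x y = (\<Sum>z\<in>J. if z = y then A x z else 0)"
    unfolding fmul_def dl_def by (rule sum.cong) auto
  then show ?thesis using \<open>y \<in> J\<close> \<open>finite J\<close> by simp
qed

lemma cpm_sum: "degree p \<le> N \<Longrightarrow> cpm J A p x y = (\<Sum>i\<le>N. coeff p i * mpow J A i x y)"
  unfolding cpm_def
  by (rule sum.mono_neutral_left) (auto simp: coeff_eq_0)

lemma cpm_add: "cpm J A (p + q) x y = cpm J A p x y + cpm J A q x y"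
proof -
  let ?N = "max (degree p) (degree q)"
  have "degree (p + q) \<le> ?N" by (rule degree_add_le) auto
  then show ?thesis
    by (simp add: cpm_sum[of _ ?N] sum.distrib algebra_simps)
qed

lemma cpm_smult: "cpm J A (smult c p) x y = c * cpm J A p x y"
proof -
  have "degree (smult c p) \<le> degree p" by (rule degree_smult_le)
  then show ?thesis by (simp add: cpm_sum[of _ "degree p"] sum_distrib_left mult.assoc cpm_def)
qed

lemma cpm_0[simp]: "cpm J A 0 x y = 0" by (simp add: cpm_def)

lemma cpm_minus: "cpm J A (p - q) x y = cpm J A p x y - cpm J A q x y"
  using cpm_add[of J A "p - q" q x y] by simp

lemma cpm_const: "cpm J A [:c:] x y = c * dl x y"
  by (simp add: cpm_def dl_def)

lemma cpm_pCons: assumes "finite J"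
  shows "cpm J A (pCons a p) x y = a * dl x y + fmul J A (cpm J A p) x y"
proof -
  have d: "degree (pCons a p) \<le> Suc (degree p)" by (simp add: degree_pCons_le)
  have "cpm J A (pCons a p) x y = (\<Sum>i\<le>Suc (degree p). coeff (pCons a p) i * mpow J A i x y)"
    by (rule cpm_sum[OF d])
  also have "\<dots> = a * dl x y + (\<Sum>i\<le>degree p. coeff p i * mpow J A (Suc i) x y)"
    by (subst sum.atMost_Suc_shift) (simp add: dl_def)
  also have "(\<Sum>i\<le>degree p. coeff p i * mpow J A (Suc i) x y) = fmul J A (cpm J A p) x y"
    unfolding mpow_Suc_f[OF assms] fmul_def cpm_def sum_distrib_left
    by (subst sum.swap) (simp add: algebra_simps)
  finally show ?thesis .
qed

lemma cpm_mult: assumes "finite J" "x \<in> J"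
  shows "cpm J A (p * q) x y = fmul J (cpm J A p) (cpm J A q) x y"
  using assms(2)
proof (induction p arbitrary: x y rule: pCons_induct)
  case 0
  then show ?case by (simp add: fmul_def)
next
  case (pCons a p)
  have "cpm J A (pCons a p * q) x y = a * cpm J A q x y + fmul J A (cpm J A (p * q)) x y"
    by (simp add: cpm_add cpm_smult cpm_pCons[OF assms(1)])
  also have "fmul J A (cpm J A (p * q)) = fmul J A (fmul J (cpm J A p) (cpm J A q))"
    using pCons.IH by (auto simp: fmul_def intro!: ext sum.cong)
  also have "\<dots> x y = fmul J (fmul J A (cpm J A p)) (cpm J A q) x y"
    by (simp add: fmul_assoc)
  also have "a * cpm J A q x y = (\<Sum>z\<in>J. a * dl x z * cpm J A q z y)"
  proof -
    have "(\<Sum>z\<in>J. a * dl x z * cpm J A q z y) = (\<Sum>z\<in>J. if x = z then a * cpm J A q z y else 0)"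
      by (rule sum.cong) (auto simp: dl_def)
    then show ?thesis using pCons.prems assms(1) by simp
  qed
  finally show ?case
    by (simp add: cpm_pCons[OF assms(1)] fmul_def sum.distrib distrib_right)
qed

lemma cpm_one: "cpm J A 1 x y = dl x y"
  using cpm_const[of J A 1 x y] by (simp add: one_pCons)

lemma mpow_Suc_right: assumes "finite J" "x \<in> J" "y \<in> J"
  shows "mpow J A (Suc k) x y = fmul J (mpow J A k) A x y"
  using assms(2)
proof (induction k arbitrary: x)
  case 0
  then show ?case using assms by (simp add: mpow_Suc_f fmul_dl_left fmul_dl_right mpow_0_dl[abs_def] del: mpow.simps)
next
  case (Suc k)
  have "mpow J A (Suc (Suc k)) x y = fmul J A (mpow J A (Suc k)) x y"
    by (simp add: mpow_Suc_f[OF assms(1)] del: mpow.simps)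
  also have "\<dots> = fmul J A (fmul J (mpow J A k) A) x y"
  proof -
    have "\<And>z. z \<in> J \<Longrightarrow> mpow J A (Suc k) z y = fmul J (mpow J A k) A z y"
      by (rule Suc.IH)
    then show ?thesis unfolding fmul_def by (intro sum.cong) (simp_all del: mpow.simps)
  qed
  also have "\<dots> = fmul J (fmul J A (mpow J A k)) A x y"
    by (simp add: fmul_assoc)
  also have "fmul J A (mpow J A k) = mpow J A (Suc k)"
    using assms(1) by (simp add: fun_eq_iff mpow_Suc_f del: mpow.simps)
  finally show ?case .
qed

definition herm :: "'a set \<Rightarrow> ('a\<Rightarrow>'a\<Rightarrow>complex) \<Rightarrow> bool" where
  "herm J A \<longleftrightarrow> (\<forall>x\<in>J. \<forall>y\<in>J. A x y = cnj (A y x))"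

lemma herm_mpow: assumes "finite J" "herm J A" shows "herm J (mpow J A k)"
proof (induction k)
  case 0
  then show ?case by (auto simp: herm_def)
next
  case (Suc k)
  show ?case unfolding herm_def
  proof (intro ballI)
    fix x y assume x: "x \<in> J" and y: "y \<in> J"
    have "cnj (mpow J A (Suc k) y x) = (\<Sum>z\<in>J. cnj (A y z) * cnj (mpow J A k z x))"
      by (simp add: mpow_Suc_f[OF assms(1)] fmul_def del: mpow.simps)
    also have "\<dots> = (\<Sum>z\<in>J. mpow J A k x z * A z y)"
    proof (rule sum.cong)
      fix z assume z: "z \<in> J"
      have "A z y = cnj (A y z)" using assms(2) z y unfolding herm_def by blast
      moreover have "mpow J A k x z = cnj (mpow J A k z x)" using Suc.IH z x unfolding herm_def by blast
      ultimately show "cnj (A y z) * cnj (mpow J A k z x) = mpow J A k x z * A z y"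
        by (simp add: mult.commute)
    qed simp
    also have "\<dots> = mpow J A (Suc k) x y"
      using mpow_Suc_right[OF assms(1) x y] by (simp add: fmul_def)
    finally show "mpow J A (Suc k) x y = cnj (mpow J A (Suc k) y x)" by simp
  qed
qed

lemma herm_cpm: assumes "finite J" "herm J A" "\<forall>i. coeff p i \<in> \<real>"
  shows "herm J (cpm J A p)"
  unfolding herm_def
proof (intro ballI)
  fix x y assume x: "x \<in> J" and y: "y \<in> J"
  have "cnj (cpm J A p y x) = (\<Sum>i\<le>degree p. cnj (coeff p i) * cnj (mpow J A i y x))"
    by (simp add: cpm_def)
  also have "\<dots> = cpm J A p x y"
    unfolding cpm_def
  proof (rule sum.cong)
    fix i assume "i \<in> {..degree p}"
    have "mpow J A i x y = cnj (mpow J A i y x)" using herm_mpow[OF assms(1,2), of i] x y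
      unfolding herm_def by blast
    moreover have "cnj (coeff p i) = coeff p i" using assms(3) by (simp add: Reals_cnj_iff)
    ultimately show "cnj (coeff p i) * cnj (mpow J A i y x) = coeff p i * mpow J A i x y" by simp
  qed simp
  finally show "cpm J A p x y = cnj (cpm J A p y x)" by simp
qed

lemma polymat_cpm: "polymat J A p x y = cpm J A (map_poly complex_of_real p) x y"
  unfolding polymat_def cpm_def
  by (simp add: degree_map_poly coeff_map_poly)



definition mv :: "'a set \<Rightarrow> ('a\<Rightarrow>'a\<Rightarrow>complex) \<Rightarrow> ('a \<Rightarrow> complex) \<Rightarrow> 'a \<Rightarrow> complex" where
  "mv J A u x = (\<Sum>y\<in>J. A x y * u y)"

definition Eig :: "'a set \<Rightarrow> ('a\<Rightarrow>'a\<Rightarrow>complex) \<Rightarrow> complex set" where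
  "Eig J A = {z. \<exists>w. (\<exists>x\<in>J. w x \<noteq> 0) \<and> (\<forall>x\<in>J. mv J A w x = z * w x)}"

definition Ann :: "'a set \<Rightarrow> ('a\<Rightarrow>'a\<Rightarrow>complex) \<Rightarrow> complex poly \<Rightarrow> bool" where
  "Ann J A P \<longleftrightarrow> (\<forall>x\<in>J. \<forall>y\<in>J. cpm J A P x y = 0)"

lemma lin_fac: assumes "finite J"
  shows "cpm J A ([:-z,1:] * Q) x y = (\<Sum>w\<in>J. A x w * cpm J A Q w y) - z * cpm J A Q x y"
proof -
  have "[:-z,1:] * Q = smult (-z) Q + pCons 0 Q" by (simp add: mult_pCons_left)
  then show ?thesis
    by (simp add: cpm_add cpm_minus cpm_smult cpm_pCons[OF assms] fmul_def)
qed

lemma cancel_noneig: assumes "finite J" "z \<notin> Eig J A" "Ann J A ([:-z,1:] * Q)"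
  shows "Ann J A Q"
  unfolding Ann_def
proof (intro ballI)
  fix x y assume x: "x \<in> J" and y: "y \<in> J"
  let ?w = "\<lambda>u. cpm J A Q u y"
  have "\<forall>u\<in>J. mv J A ?w u = z * ?w u"
  proof
    fix u assume u: "u \<in> J"
    have "cpm J A ([:-z,1:] * Q) u y = 0" using assms(3) u y by (simp add: Ann_def)
    then show "mv J A ?w u = z * ?w u" using lin_fac[OF assms(1), where A=A and z=z and Q=Q and x=u and y=y] by (simp add: mv_def)
  qed
  show "cpm J A Q x y = 0"
  proof (rule ccontr)
    assume "cpm J A Q x y \<noteq> 0"
    then have "z \<in> Eig J A" unfolding Eig_def
      using x \<open>\<forall>u\<in>J. mv J A ?w u = z * ?w u\<close> by (intro CollectI exI[of _ ?w]) auto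
    then show False using assms(2) by contradiction
  qed
qed

lemma cnj_mult_self: "cnj a * a = complex_of_real ((cmod a)\<^sup>2)"
  by (metis complex_norm_square mult.commute)

lemma sum_cnj_self_zero:
  assumes "finite J" "(\<Sum>x\<in>J. cnj (u x) * u x) = 0" "x \<in> J"
  shows "u x = 0"
proof -
  have "(\<Sum>x\<in>J. cnj (u x) * u x) = complex_of_real (\<Sum>x\<in>J. (cmod (u x))\<^sup>2)"
    by (simp only: cnj_mult_self of_real_sum)
  then have "(\<Sum>x\<in>J. (cmod (u x))\<^sup>2) = 0" using assms(2) by (metis of_real_eq_0_iff)
  then have "\<forall>x\<in>J. (cmod (u x))\<^sup>2 = 0"
    using sum_nonneg_eq_0_iff[OF assms(1), of "\<lambda>x. (cmod (u x))\<^sup>2"] by simp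
  then have "(cmod (u x))\<^sup>2 = 0" using assms(3) by blast
  then show ?thesis by simp
qed

lemma herm_swap_sum:
  assumes "finite J" "herm J A"
  shows "(\<Sum>x\<in>J. cnj (u x) * (\<Sum>w\<in>J. A x w * v w)) = (\<Sum>w\<in>J. v w * cnj (\<Sum>x\<in>J. A w x * u x))"
proof -
  have "(\<Sum>x\<in>J. cnj (u x) * (\<Sum>w\<in>J. A x w * v w)) = (\<Sum>x\<in>J. \<Sum>w\<in>J. cnj (u x) * A x w * v w)"
    by (simp add: sum_distrib_left mult.assoc)
  also have "\<dots> = (\<Sum>w\<in>J. \<Sum>x\<in>J. cnj (u x) * A x w * v w)" by (rule sum.swap)
  also have "\<dots> = (\<Sum>w\<in>J. v w * cnj (\<Sum>x\<in>J. A w x * u x))"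
  proof (rule sum.cong)
    fix w assume w: "w \<in> J"
    have "(\<Sum>x\<in>J. cnj (u x) * A x w * v w) = v w * (\<Sum>x\<in>J. cnj (A w x * u x))"
    proof -
      have "\<And>x. x \<in> J \<Longrightarrow> A x w = cnj (A w x)" using assms(2) w unfolding herm_def by blast
      then have "(\<Sum>x\<in>J. cnj (u x) * A x w * v w) = (\<Sum>x\<in>J. v w * cnj (A w x * u x))"
        by (intro sum.cong) (auto simp: mult_ac)
      then show ?thesis by (simp add: sum_distrib_left)
    qed
    then show "(\<Sum>x\<in>J. cnj (u x) * A x w * v w) = v w * cnj (\<Sum>x\<in>J. A w x * u x)"
      by simp
  qed simp
  finally show ?thesis .
qed

lemma cancel_double: assumes "finite J" "herm J A" "z \<in> \<real>"
  "Ann J A ([:-z,1:] * ([:-z,1:] * Q))"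
  shows "Ann J A ([:-z,1:] * Q)"
  unfolding Ann_def
proof (intro ballI)
  fix x y assume x: "x \<in> J" and y: "y \<in> J"
  let ?v = "\<lambda>u. cpm J A Q u y"
  let ?u = "\<lambda>u. cpm J A ([:-z,1:] * Q) u y"
  have u_eq: "?u a = (\<Sum>w\<in>J. A a w * ?v w) - z * ?v a" for a
    by (rule lin_fac[OF assms(1)])
  have Bu: "(\<Sum>w\<in>J. A a w * ?u w) - z * ?u a = 0" if "a \<in> J" for a
    using lin_fac[OF assms(1), where A=A and z=z and Q="[:-z,1:] * Q" and x=a and y=y] assms(4) that y by (simp add: Ann_def)
  have cz: "cnj z = z" using assms(3) by (simp add: Reals_cnj_iff)
  have "(\<Sum>a\<in>J. cnj (?u a) * ?u a) = (\<Sum>a\<in>J. cnj (?u a) * (\<Sum>w\<in>J. A a w * ?v w)) - (\<Sum>a\<in>J. cnj (?u a) * (z * ?v a))"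
    by (simp only: u_eq[symmetric] right_diff_distrib[symmetric] sum_subtractf[symmetric])
  also have "(\<Sum>a\<in>J. cnj (?u a) * (\<Sum>w\<in>J. A a w * ?v w)) = (\<Sum>w\<in>J. ?v w * cnj (\<Sum>a\<in>J. A w a * ?u a))"
    by (rule herm_swap_sum[OF assms(1,2)])
  also have "(\<Sum>a\<in>J. cnj (?u a) * (z * ?v a)) = (\<Sum>w\<in>J. ?v w * cnj (z * ?u w))"
    by (intro sum.cong) (simp_all add: cz mult_ac)
  also have "(\<Sum>w\<in>J. ?v w * cnj (\<Sum>a\<in>J. A w a * ?u a)) - (\<Sum>w\<in>J. ?v w * cnj (z * ?u w))
      = (\<Sum>w\<in>J. ?v w * cnj ((\<Sum>a\<in>J. A w a * ?u a) - z * ?u w))"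
    by (simp add: sum_subtractf right_diff_distrib)
  also have "\<dots> = 0" using Bu by (intro sum.neutral) simp
  finally have "(\<Sum>a\<in>J. cnj (?u a) * ?u a) = 0" .
  from sum_cnj_self_zero[OF assms(1) this x] show "cpm J A ([:-z,1:] * Q) x y = 0" .
qed

lemma eig_real: assumes "finite J" "herm J A" "z \<in> Eig J A" shows "z \<in> \<real>"
proof -
  obtain w x0 where x0: "x0 \<in> J" "w x0 \<noteq> 0" and ev: "\<forall>x\<in>J. mv J A w x = z * w x"
    using assms(3) unfolding Eig_def by blast
  let ?s = "\<Sum>x\<in>J. cnj (w x) * (\<Sum>y\<in>J. A x y * w y)"
  have s1: "?s = z * (\<Sum>x\<in>J. cnj (w x) * w x)"
    using ev by (simp add: mv_def sum_distrib_left mult_ac)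
  have s2: "?s = (\<Sum>y\<in>J. w y * cnj (\<Sum>x\<in>J. A y x * w x))" by (rule herm_swap_sum[OF assms(1,2)])
  have sreal: "cnj ?s = ?s"
    by (subst (1) s2) (simp only: cnj_sum complex_cnj_mult complex_cnj_cnj)
  have nreal: "(\<Sum>x\<in>J. cnj (w x) * w x) = complex_of_real (\<Sum>x\<in>J. (cmod (w x))\<^sup>2)"
    by (simp only: cnj_mult_self of_real_sum)
  have npos: "(\<Sum>x\<in>J. (cmod (w x))\<^sup>2) > 0"
  proof -
    have "(cmod (w x0))\<^sup>2 > 0" using x0 by simp
    moreover have "(cmod (w x0))\<^sup>2 \<le> (\<Sum>x\<in>J. (cmod (w x))\<^sup>2)"
      using x0 assms(1) by (intro member_le_sum) auto
    ultimately show ?thesis by linarith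
  qed
  define n where "n = (\<Sum>x\<in>J. (cmod (w x))\<^sup>2)"
  have "cnj z * complex_of_real n = z * complex_of_real n"
    using sreal s1 nreal unfolding n_def by (metis complex_cnj_complex_of_real complex_cnj_mult)
  moreover have "n > 0" using npos unfolding n_def .
  then have "complex_of_real n \<noteq> 0" by simp
  ultimately have "cnj z = z" by (metis mult_right_cancel)
  then show ?thesis by (simp add: Reals_cnj_iff)
qed

definition opbound :: "'a set \<Rightarrow> ('a\<Rightarrow>'a\<Rightarrow>complex) \<Rightarrow> real \<Rightarrow> bool" where
  "opbound J A r \<longleftrightarrow> (\<forall>u. (\<Sum>x\<in>J. (cmod (mv J A u x))\<^sup>2) \<le> r\<^sup>2 * (\<Sum>x\<in>J. (cmod (u x))\<^sup>2))"

lemma eig_bound: assumes "finite J" "opbound J A r" "r \<ge> 0" "z \<in> Eig J A" shows "cmod z \<le> r"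
proof -
  obtain w x0 where x0: "x0 \<in> J" "w x0 \<noteq> 0" and ev: "\<forall>x\<in>J. mv J A w x = z * w x"
    using assms(4) unfolding Eig_def by blast
  define n where "n = (\<Sum>x\<in>J. (cmod (w x))\<^sup>2)"
  have npos: "n > 0"
  proof -
    have "(cmod (w x0))\<^sup>2 > 0" using x0 by simp
    moreover have "(cmod (w x0))\<^sup>2 \<le> n"
      using x0 assms(1) unfolding n_def by (intro member_le_sum) auto
    ultimately show ?thesis by linarith
  qed
  have "(\<Sum>x\<in>J. (cmod (mv J A w x))\<^sup>2) = (cmod z)\<^sup>2 * n"
    unfolding n_def sum_distrib_left using ev by (intro sum.cong) (auto simp: norm_mult power_mult_distrib)
  then have "(cmod z)\<^sup>2 * n \<le> r\<^sup>2 * n" using assms(2) unfolding opbound_def n_def by metis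
  then have "(cmod z)\<^sup>2 \<le> r\<^sup>2" using npos by simp
  then show ?thesis using assms(3) by (simp add: power2_le_iff_abs_le)
qed

definition Pz :: "complex set \<Rightarrow> complex poly" where
  "Pz Z = (\<Prod>z\<in>Z. [:-z,1:])"

lemma Ann_cong: "P = Q \<Longrightarrow> Ann J A P \<Longrightarrow> Ann J A Q" by simp

lemma RED: assumes "finite J" "herm J A"
  shows "finite Z \<Longrightarrow> Z \<subseteq> Eig J A \<Longrightarrow> Ann J A (Pz Z * (\<Prod>z\<in>#M. [:-z,1:]))
     \<Longrightarrow> \<exists>Z'. finite Z' \<and> Z' \<subseteq> Eig J A \<and> Ann J A (Pz Z')"
proof (induction M arbitrary: Z)
  case empty
  then show ?case by auto
next
  case (add z0 M)
  let ?R = "\<Prod>z\<in>#M. [:-z,1:]"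
  have P: "Pz Z * (\<Prod>z\<in>#add_mset z0 M. [:-z,1:]) = [:-z0,1:] * (Pz Z * ?R)"
    by (simp add: mult_ac del: mult_pCons_left mult_pCons_right)
  show ?case
  proof (cases "z0 \<in> Eig J A")
    case False
    have "Ann J A (Pz Z * ?R)"
      by (rule cancel_noneig[OF assms(1) False]) (use add.prems(3) in \<open>simp only: P\<close>)
    then show ?thesis using add.IH add.prems(1,2) by blast
  next
    case True
    show ?thesis
    proof (cases "z0 \<in> Z")
      case False
      have "Pz (insert z0 Z) = [:-z0,1:] * Pz Z"
        using add.prems(1) False by (simp add: Pz_def)
      then have "Pz (insert z0 Z) * ?R = Pz Z * (\<Prod>z\<in>#add_mset z0 M. [:-z,1:])"
        by (simp add: mult_ac del: mult_pCons_left mult_pCons_right)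
      then have "Ann J A (Pz (insert z0 Z) * ?R)" using add.prems(3) by simp
      then show ?thesis using add.IH[of "insert z0 Z"] add.prems(1,2) True by blast
    next
      case z0Z: True
      have PZ: "Pz Z = [:-z0,1:] * Pz (Z - {z0})"
        using add.prems(1) z0Z unfolding Pz_def by (simp add: prod.remove)
      have "Pz Z * (\<Prod>z\<in>#add_mset z0 M. [:-z,1:]) = [:-z0,1:] * ([:-z0,1:] * (Pz (Z - {z0}) * ?R))"
        using PZ by (simp add: mult_ac del: mult_pCons_left mult_pCons_right)
      then have "Ann J A ([:-z0,1:] * ([:-z0,1:] * (Pz (Z - {z0}) * ?R)))"
        using add.prems(3) by simp
      then have "Ann J A ([:-z0,1:] * (Pz (Z - {z0}) * ?R))"
        by (rule cancel_double[OF assms(1,2) eig_real[OF assms(1,2) True]])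
      moreover have "[:-z0,1:] * (Pz (Z - {z0}) * ?R) = Pz Z * ?R"
        using PZ by (simp add: mult_ac del: mult_pCons_left mult_pCons_right)
      ultimately have "Ann J A (Pz Z * ?R)" by simp
      then show ?thesis using add.IH add.prems(1,2) by blast
    qed
  qed
qed



lemma sum_fun_app: "(\<Sum>i\<in>S. F i) q = (\<Sum>i\<in>S. F i q)"
  by (induction S rule: infinite_finite_induct) auto

lemma cpm_monom1: "cpm J A (monom 1 i) x y = mpow J A i x y"
proof -
  have "cpm J A (monom 1 i) x y = (\<Sum>k\<le>i. coeff (monom 1 i) k * mpow J A k x y)"
    by (rule cpm_sum) (simp add: degree_monom_le)
  also have "\<dots> = (\<Sum>k\<le>i. if k = i then mpow J A k x y else 0)"
    by (intro sum.cong) (auto simp: coeff_monom)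
  finally show ?thesis by simp
qed

lemma ann_exists: assumes "finite J" shows "\<exists>m. m \<noteq> 0 \<and> Ann J A m"
proof -
  define Mk where "Mk k = (\<lambda>q::'a\<times>'a. if fst q \<in> J \<and> snd q \<in> J then mpow J A k (fst q) (snd q) else 0)" for k
  define N where "N = card (J \<times> J)"
  show ?thesis
  proof (cases "inj_on Mk {..N}")
    case False
    then obtain i j where ij: "i \<noteq> j" "Mk i = Mk j" by (auto simp: inj_on_def)
    define m where "m = monom (1::complex) i - monom 1 j"
    have "coeff m i = 1" using ij(1) by (simp add: m_def coeff_monom)
    then have "m \<noteq> 0" by auto
    moreover have "Ann J A m" unfolding Ann_def
    proof (intro ballI)
      fix x y assume "x \<in> J" "y \<in> J"
      then have "mpow J A i x y = mpow J A j x y"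
        using fun_cong[OF ij(2), of "(x,y)"] by (simp add: Mk_def)
      then show "cpm J A m x y = 0" by (simp add: m_def cpm_minus cpm_monom1)
    qed
    ultimately show ?thesis by blast
  next
    case True
    interpret V: vector_space "\<lambda>(c::complex) (f::'a\<times>'a\<Rightarrow>complex). (\<lambda>q. c * f q)"
      by unfold_locales (auto simp: fun_eq_iff algebra_simps)
    define e where "e q0 = (\<lambda>q::'a\<times>'a. if q = q0 then (1::complex) else 0)" for q0
    define T where "T = e ` (J \<times> J)"
    have fT: "finite T" using assms by (simp add: T_def)
    have cT: "card T \<le> N" unfolding T_def N_def by (rule card_image_le) (simp add: assms)
    have sp: "Mk ` {..N} \<subseteq> V.span T"
    proof
      fix f assume "f \<in> Mk ` {..N}"
      then obtain k where f: "f = Mk k" by blast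
      have "f = (\<Sum>q0\<in>J \<times> J. (\<lambda>q. f q0 * e q0 q))"
      proof
        fix q
        have "(\<Sum>q0\<in>J \<times> J. (\<lambda>q. f q0 * e q0 q)) q = (\<Sum>q0\<in>J \<times> J. f q0 * e q0 q)"
          by (rule sum_fun_app)
        also have "\<dots> = (\<Sum>q0\<in>J \<times> J. if q0 = q then f q0 else 0)"
          by (intro sum.cong) (auto simp: e_def)
        also have "\<dots> = (if q \<in> J \<times> J then f q else 0)"
          using assms by simp
        also have "\<dots> = f q" by (cases q) (auto simp: f Mk_def)
        finally show "f q = (\<Sum>q0\<in>J \<times> J. (\<lambda>q. f q0 * e q0 q)) q" by simp
      qed
      also have "\<dots> \<in> V.span T"
        by (intro V.span_sum V.span_scale V.span_base) (auto simp: T_def)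
      finally show "f \<in> V.span T" .
    qed
    have cS: "card (Mk ` {..N}) = Suc N" using True by (simp add: card_image)
    have "\<not> V.independent (Mk ` {..N})"
    proof
      assume "V.independent (Mk ` {..N})"
      from V.independent_span_bound[OF fT this sp] cT cS show False by simp
    qed
    then obtain u where u: "\<exists>v\<in>Mk ` {..N}. u v \<noteq> 0"
        "(\<Sum>v\<in>Mk ` {..N}. (\<lambda>q. u v * v q)) = 0"
      using V.dependent_finite[of "Mk ` {..N}"] by auto
    define m where "m = (\<Sum>k\<le>N. monom (u (Mk k)) k)"
    have cm: "coeff m i = (if i \<le> N then u (Mk i) else 0)" for i
      by (simp add: m_def coeff_sum coeff_monom)
    have "m \<noteq> 0"
    proof
      assume "m = 0"
      then have "\<forall>i\<le>N. u (Mk i) = 0" using cm by (metis coeff_0)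
      with u(1) show False by auto
    qed
    moreover have "Ann J A m" unfolding Ann_def
    proof (intro ballI)
      fix x y assume xy: "x \<in> J" "y \<in> J"
      have dm: "degree m \<le> N" by (rule degree_le) (simp add: cm)
      have "cpm J A m x y = (\<Sum>k\<le>N. u (Mk k) * mpow J A k x y)"
        by (simp add: cpm_sum[OF dm] cm)
      also have "\<dots> = (\<Sum>k\<le>N. u (Mk k) * Mk k (x,y))"
        using xy by (simp add: Mk_def)
      also have "\<dots> = (\<Sum>v\<in>Mk ` {..N}. u v * v (x,y))"
        using True by (simp add: sum.reindex)
      also have "\<dots> = (\<Sum>v\<in>Mk ` {..N}. (\<lambda>q. u v * v q)) (x,y)"
        by (simp add: sum_fun_app)
      also have "\<dots> = 0" using u(2) by simp
      finally show "cpm J A m x y = 0" .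
    qed
    ultimately show ?thesis by blast
  qed
qed


definition Ez :: "complex set \<Rightarrow> complex \<Rightarrow> complex poly" where
  "Ez Z z = smult (\<Prod>w\<in>Z-{z}. inverse (z - w)) (Pz (Z - {z}))"

lemma poly_Pz: "poly (Pz S) x = (\<Prod>w\<in>S. x - w)"
  by (simp add: Pz_def poly_prod)

lemma poly_Ez: assumes "finite Z" "z \<in> Z" "z' \<in> Z"
  shows "poly (Ez Z z) z' = (if z' = z then 1 else 0)"
proof (cases "z' = z")
  case True
  have "poly (Ez Z z) z' = (\<Prod>w\<in>Z-{z}. inverse (z - w) * (z - w))"
    using True by (simp add: Ez_def poly_Pz prod.distrib)
  also have "\<dots> = 1"
  proof (rule prod.neutral, rule ballI)
    fix w assume "w \<in> Z - {z}"
    then have "z - w \<noteq> 0" by auto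
    then show "inverse (z - w) * (z - w) = 1" by simp
  qed
  finally show ?thesis using True by simp
next
  case False
  have "(\<Prod>w\<in>Z-{z}. z' - w) = 0"
    using assms False by (subst prod_zero_iff) auto
  then show ?thesis using False by (simp add: Ez_def poly_Pz)
qed

lemma degree_Pz: "finite S \<Longrightarrow> degree (Pz S) \<le> card S"
proof -
  assume "finite S"
  then have "degree (Pz S) \<le> sum (degree \<circ> (\<lambda>w. [:-w,1:])) S"
    unfolding Pz_def by (rule degree_prod_sum_le)
  also have "\<dots> = card S" by simp
  finally show ?thesis .
qed

lemma degree_Ez: "finite Z \<Longrightarrow> z \<in> Z \<Longrightarrow> degree (Ez Z z) < card Z"
proof -
  assume a: "finite Z" "z \<in> Z"
  have "degree (Ez Z z) \<le> degree (Pz (Z - {z}))" unfolding Ez_def by (rule degree_smult_le)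
  also have "\<dots> \<le> card (Z - {z})" using a by (intro degree_Pz) auto
  also have "\<dots> < card Z" using a by (metis card_Diff1_less)
  finally show ?thesis .
qed

lemma sumE_dvd: assumes "finite Z" shows "Pz Z dvd ((\<Sum>z\<in>Z. Ez Z z) - 1)"
proof (cases "Z = {}")
  case True
  then show ?thesis by (simp add: Pz_def)
next
  case False
  let ?q = "(\<Sum>z\<in>Z. Ez Z z) - 1"
  have "?q = 0"
  proof (rule ccontr)
    assume q0: "?q \<noteq> 0"
    have d1: "degree (\<Sum>z\<in>Z. Ez Z z) \<le> card Z - 1"
    proof (rule degree_sum_le[OF assms])
      fix p assume "p \<in> Z"
      from degree_Ez[OF assms this] show "degree (Ez Z p) \<le> card Z - 1" by linarith
    qed
    have "degree ?q \<le> card Z - 1"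
      by (rule degree_diff_le[OF d1]) simp
    moreover have "Z \<subseteq> {x. poly ?q x = 0}"
    proof
      fix z' assume z': "z' \<in> Z"
      have "poly (\<Sum>z\<in>Z. Ez Z z) z' = (\<Sum>z\<in>Z. if z' = z then 1 else 0)"
        unfolding poly_sum using poly_Ez[OF assms _ z'] by (intro sum.cong) auto
      also have "\<dots> = 1" using z' assms by simp
      finally show "z' \<in> {x. poly ?q x = 0}" by simp
    qed
    then have "card Z \<le> card {x. poly ?q x = 0}"
      by (intro card_mono poly_roots_finite q0)
    moreover have "card {x. poly ?q x = 0} \<le> degree ?q" by (rule card_poly_roots_bound[OF q0])
    moreover have "card Z > 0" using False assms by (simp add: card_gt_0_iff)
    ultimately show False by linarith
  qed
  then show ?thesis by simp
qed

lemma Pz_remove: "finite Z \<Longrightarrow> z \<in> Z \<Longrightarrow> Pz Z = [:-z,1:] * Pz (Z - {z})"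
  unfolding Pz_def by (simp add: prod.remove)

lemma prodE_dvd: assumes "finite Z" "z \<in> Z" "z' \<in> Z" "z \<noteq> z'"
  shows "Pz Z dvd Ez Z z * Ez Z z'"
proof -
  have "[:-z,1:] dvd Pz (Z - {z'})" unfolding Pz_def
    using assms by (intro dvd_prodI) auto
  then have "[:-z,1:] * Pz (Z - {z}) dvd Pz (Z - {z'}) * Pz (Z - {z})"
    by (rule mult_dvd_mono) simp
  then have "Pz Z dvd Pz (Z - {z}) * Pz (Z - {z'})"
    using Pz_remove[OF assms(1,2)] by (simp add: mult.commute)
  then show ?thesis unfolding Ez_def
    by (simp add: dvd_smult)
qed

lemma pE_dvd: assumes "finite Z" "z \<in> Z"
  shows "Pz Z dvd (P - [:poly P z:]) * Ez Z z"
proof -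
  have "[:-z,1:] dvd P - [:poly P z:]"
    by (simp add: poly_eq_0_iff_dvd[symmetric])
  then have "[:-z,1:] * Pz (Z - {z}) dvd (P - [:poly P z:]) * Pz (Z - {z})"
    by (rule mult_dvd_mono) simp
  then show ?thesis unfolding Ez_def Pz_remove[OF assms]
    by (simp add: dvd_smult)
qed

lemma Ann_dvd: assumes "finite J" "Ann J A Q" "Q dvd P" shows "Ann J A P"
proof -
  obtain R where P: "P = Q * R" using assms(3) by blast
  show ?thesis unfolding Ann_def
  proof (intro ballI)
    fix x y assume x: "x \<in> J" and y: "y \<in> J"
    have "cpm J A P x y = fmul J (cpm J A Q) (cpm J A R) x y"
      unfolding P by (rule cpm_mult[OF assms(1) x])
    also have "\<dots> = 0" unfolding fmul_def using assms(2) x by (simp add: Ann_def)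
    finally show "cpm J A P x y = 0" .
  qed
qed

lemma Ann_eq: "Ann J A (P - Q) \<Longrightarrow> x \<in> J \<Longrightarrow> y \<in> J \<Longrightarrow> cpm J A P x y = cpm J A Q x y"
  using cpm_minus[of J A P Q x y] by (simp add: Ann_def)

lemma cpm_sumP: "cpm J A (\<Sum>i\<in>S. F i) x y = (\<Sum>i\<in>S. cpm J A (F i) x y)"
  by (induction S rule: infinite_finite_induct) (auto simp: cpm_add)

definition rc :: "complex poly \<Rightarrow> bool" where "rc p \<longleftrightarrow> (\<forall>i. coeff p i \<in> \<real>)"

lemma rc_mult: "rc p \<Longrightarrow> rc q \<Longrightarrow> rc (p * q)"
  unfolding rc_def coeff_mult by (auto intro!: sum_in_Reals Reals_mult)

lemma rc_prod: "(\<And>i. i \<in> S \<Longrightarrow> rc (F i)) \<Longrightarrow> rc (\<Prod>i\<in>S. F i)"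
proof (induction S rule: infinite_finite_induct)
  case (infinite A)
  then show ?case by (simp add: rc_def coeff_1)
next
  case empty
  then show ?case by (simp add: rc_def coeff_1)
next
  case (insert x F)
  then show ?case by (simp add: rc_mult)
qed

lemma rc_smult: "c \<in> \<real> \<Longrightarrow> rc p \<Longrightarrow> rc (smult c p)"
  unfolding rc_def by (auto intro: Reals_mult)

lemma rc_Ez: assumes "Z \<subseteq> \<real>" "z \<in> Z" shows "rc (Ez Z z)"
proof -
  have "rc [:-w,1:]" if "w \<in> Z" for w
    using assms that unfolding rc_def by (auto simp: coeff_pCons split: nat.splits)
  then have "rc (Pz (Z - {z}))" unfolding Pz_def by (intro rc_prod) auto
  moreover have "(\<Prod>w\<in>Z-{z}. inverse (z - w)) \<in> \<real>"
    using assms by (intro prod_in_Reals Reals_inverse Reals_diff) auto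
  ultimately show ?thesis unfolding Ez_def by (intro rc_smult)
qed

lemma poly_of_real_map: "poly (map_poly complex_of_real p) (complex_of_real t) = complex_of_real (poly p t)"
  by (induction p) (auto simp: map_poly_pCons)

lemma spec_bound:
  assumes J: "finite J" and H: "herm J A" and ob: "opbound J A r" and r: "r \<ge> 0"
    and x: "x \<in> J" and y: "y \<in> J"
    and pb: "\<And>t. \<bar>t\<bar> \<le> r \<Longrightarrow> \<bar>poly p t\<bar> \<le> \<epsilon>"
  shows "cmod (polymat J A p x y) \<le> \<epsilon>"
proof -
  have eps: "\<epsilon> \<ge> 0" using pb[of 0] r by auto
  obtain m where m: "m \<noteq> 0" "Ann J A m" using ann_exists[OF J] by blast
  have md: "smult (lead_coeff m) (\<Prod>x\<in>#proots m. [:-x, 1:]) = m"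
    by (rule complex_poly_decompose_multiset)
  have "Ann J A (\<Prod>x\<in>#proots m. [:-x, 1:])"
    unfolding Ann_def
  proof (intro ballI)
    fix a b assume "a \<in> J" "b \<in> J"
    then have "lead_coeff m * cpm J A (\<Prod>x\<in>#proots m. [:-x, 1:]) a b = 0"
      using m(2) md by (metis Ann_def cpm_smult)
    then show "cpm J A (\<Prod>x\<in>#proots m. [:-x, 1:]) a b = 0" using m(1) by simp
  qed
  then have "Ann J A (Pz {} * (\<Prod>x\<in>#proots m. [:-x, 1:]))" by (simp add: Pz_def)
  then obtain Z where Z: "finite Z" "Z \<subseteq> Eig J A" "Ann J A (Pz Z)"
    using RED[OF J H, of "{}"] by auto
  have Zr: "Z \<subseteq> \<real>" using Z(2) eig_real[OF J H] by auto
  have Zb: "cmod z \<le> r" if "z \<in> Z" for z using Z(2) eig_bound[OF J ob r] that by auto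
  define pc where "pc = map_poly complex_of_real p"
  define PP where "PP z = cpm J A (Ez Z z)" for z
  have dvd1: "Pz Z dvd P" if "Pz Z dvd - P" for P using that by simp
  have ident: "cpm J A pc x y = (\<Sum>z\<in>Z. poly pc z * PP z x y)"
  proof -
    have e: "pc - (\<Sum>z\<in>Z. smult (poly pc z) (Ez Z z)) =
        pc * (1 - (\<Sum>z\<in>Z. Ez Z z)) + (\<Sum>z\<in>Z. (pc - [:poly pc z:]) * Ez Z z)"
      by (simp add: algebra_simps sum_subtractf sum_distrib_left)
    have "Pz Z dvd pc * (1 - (\<Sum>z\<in>Z. Ez Z z))"
      using sumE_dvd[OF Z(1)] by (metis dvd_mult dvd_minus_iff minus_diff_eq)
    moreover have "Pz Z dvd (\<Sum>z\<in>Z. (pc - [:poly pc z:]) * Ez Z z)"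
      using pE_dvd[OF Z(1)] by (intro dvd_sum) auto
    ultimately have "Pz Z dvd pc - (\<Sum>z\<in>Z. smult (poly pc z) (Ez Z z))"
      unfolding e by (rule dvd_add)
    then have "Ann J A (pc - (\<Sum>z\<in>Z. smult (poly pc z) (Ez Z z)))"
      by (rule Ann_dvd[OF J Z(3)])
    from Ann_eq[OF this x y] show ?thesis
      by (simp add: cpm_sumP cpm_smult PP_def)
  qed
  have idem: "PP z a b = (\<Sum>w\<in>J. cnj (PP z w a) * PP z w b)" if z: "z \<in> Z" and a: "a \<in> J" and b: "b \<in> J" for z a b
  proof -
    have sE: "(\<Sum>z'\<in>Z. Ez Z z') = Ez Z z + (\<Sum>z'\<in>Z-{z}. Ez Z z')"
      using Z(1) z by (simp add: sum.remove)
    have e: "Ez Z z - Ez Z z * Ez Z z = Ez Z z * (1 - (\<Sum>z'\<in>Z. Ez Z z')) + (\<Sum>z'\<in>Z-{z}. Ez Z z * Ez Z z')"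
      unfolding sE by (simp add: algebra_simps sum_distrib_left)
    have "Pz Z dvd Ez Z z * (1 - (\<Sum>z'\<in>Z. Ez Z z'))"
      using sumE_dvd[OF Z(1)] by (metis dvd_mult dvd_minus_iff minus_diff_eq)
    moreover have "Pz Z dvd (\<Sum>z'\<in>Z-{z}. Ez Z z * Ez Z z')"
      using prodE_dvd[OF Z(1) z] by (intro dvd_sum) auto
    ultimately have "Pz Z dvd Ez Z z - Ez Z z * Ez Z z" unfolding e by (rule dvd_add)
    then have "Ann J A (Ez Z z - Ez Z z * Ez Z z)" by (rule Ann_dvd[OF J Z(3)])
    from Ann_eq[OF this a b] have "PP z a b = cpm J A (Ez Z z * Ez Z z) a b" by (simp add: PP_def)
    also have "\<dots> = (\<Sum>w\<in>J. PP z a w * PP z w b)"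
      by (simp add: cpm_mult[OF J a] fmul_def PP_def)
    also have "\<dots> = (\<Sum>w\<in>J. cnj (PP z w a) * PP z w b)"
    proof (rule sum.cong)
      fix w assume w: "w \<in> J"
      have "herm J (PP z)" unfolding PP_def
        using herm_cpm[OF J H] rc_Ez[OF Zr z] by (simp add: rc_def)
      then have "PP z a w = cnj (PP z w a)" using a w unfolding herm_def by blast
      then show "PP z a w * PP z w b = cnj (PP z w a) * PP z w b" by simp
    qed simp
    finally show ?thesis .
  qed
  have sum1: "(\<Sum>z\<in>Z. PP z a a) = 1" if a: "a \<in> J" for a
  proof -
    have "Ann J A ((\<Sum>z\<in>Z. Ez Z z) - 1)" by (rule Ann_dvd[OF J Z(3) sumE_dvd[OF Z(1)]])
    from Ann_eq[OF this a a] show ?thesis by (simp add: cpm_sumP PP_def cpm_one dl_def)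
  qed
  define nr where "nr z a = sqrt (\<Sum>w\<in>J. (cmod (PP z w a))\<^sup>2)" for z a
  have nr2: "(nr z a)\<^sup>2 = Re (PP z a a)" if "z \<in> Z" "a \<in> J" for z a
  proof -
    have "PP z a a = (\<Sum>w\<in>J. cnj (PP z w a) * PP z w a)" by (rule idem[OF that(1) that(2) that(2)])
    also have "\<dots> = complex_of_real (\<Sum>w\<in>J. (cmod (PP z w a))\<^sup>2)"
      by (simp only: cnj_mult_self of_real_sum)
    finally have "Re (PP z a a) = (\<Sum>w\<in>J. (cmod (PP z w a))\<^sup>2)" by simp
    then show ?thesis unfolding nr_def by (simp add: sum_nonneg)
  qed
  have L2one: "L2_set (\<lambda>z. nr z a) Z = 1" if a: "a \<in> J" for a
  proof -
    have "(\<Sum>z\<in>Z. (nr z a)\<^sup>2) = (\<Sum>z\<in>Z. Re (PP z a a))" using nr2 a by (intro sum.cong) auto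
    also have "\<dots> = Re (\<Sum>z\<in>Z. PP z a a)" by simp
    also have "\<dots> = 1" using sum1[OF a] by simp
    finally show ?thesis unfolding L2_set_def by simp
  qed
  have ppb: "cmod (PP z x y) \<le> nr z x * nr z y" if z: "z \<in> Z" for z
  proof -
    have "cmod (PP z x y) = cmod (\<Sum>w\<in>J. cnj (PP z w x) * PP z w y)" using idem[OF z x y] by simp
    also have "\<dots> \<le> (\<Sum>w\<in>J. cmod (cnj (PP z w x) * PP z w y))" by (rule norm_sum)
    also have "\<dots> = (\<Sum>w\<in>J. \<bar>cmod (PP z w x)\<bar> * \<bar>cmod (PP z w y)\<bar>)" by (simp add: norm_mult)
    also have "\<dots> \<le> L2_set (\<lambda>w. cmod (PP z w x)) J * L2_set (\<lambda>w. cmod (PP z w y)) J"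
      by (rule L2_set_mult_ineq)
    also have "\<dots> = nr z x * nr z y" by (simp add: L2_set_def nr_def)
    finally show ?thesis .
  qed
  have "cmod (polymat J A p x y) = cmod (\<Sum>z\<in>Z. poly pc z * PP z x y)"
    using ident by (simp add: polymat_cpm pc_def)
  also have "\<dots> \<le> (\<Sum>z\<in>Z. cmod (poly pc z) * cmod (PP z x y))"
    by (rule order_trans[OF norm_sum]) (simp add: norm_mult)
  also have "\<dots> \<le> (\<Sum>z\<in>Z. \<epsilon> * (nr z x * nr z y))"
  proof (rule sum_mono)
    fix z assume z: "z \<in> Z"
    have "z = complex_of_real (Re z)" using Zr z by (metis subsetD of_real_Re)
    then have "poly pc z = complex_of_real (poly p (Re z))"
      unfolding pc_def by (metis poly_of_real_map)
    moreover have "\<bar>Re z\<bar> \<le> r" using Zb[OF z] abs_Re_le_cmod order_trans by blast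
    ultimately have "cmod (poly pc z) \<le> \<epsilon>" using pb by simp
    then show "cmod (poly pc z) * cmod (PP z x y) \<le> \<epsilon> * (nr z x * nr z y)"
      using ppb[OF z] eps by (intro mult_mono) auto
  qed
  also have "\<dots> = \<epsilon> * (\<Sum>z\<in>Z. \<bar>nr z x\<bar> * \<bar>nr z y\<bar>)"
    by (simp add: sum_distrib_left nr_def sum_nonneg)
  also have "\<dots> \<le> \<epsilon> * (L2_set (\<lambda>z. nr z x) Z * L2_set (\<lambda>z. nr z y) Z)"
    by (rule mult_left_mono[OF L2_set_mult_ineq eps])
  also have "\<dots> = \<epsilon>" using L2one[OF x] L2one[OF y] by simp
  finally show ?thesis .
qed



lemma weier_poly:
  fixes f :: "real \<Rightarrow> real"
  assumes "continuous_on UNIV f" "e > 0"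
  shows "\<exists>p::real poly. \<forall>t. \<bar>t\<bar> \<le> r \<longrightarrow> \<bar>poly p t - f t\<bar> < e"
proof -
  have "continuous_on {-r..r} f" using assms(1) continuous_on_subset by blast
  then obtain g where g: "real_polynomial_function g" "\<And>x. x \<in> {-r..r} \<Longrightarrow> \<bar>f x - g x\<bar> < e"
    using Stone_Weierstrass_real_polynomial_function[of "{-r..r}" f e] assms(2) by auto
  obtain a n where gs: "g = (\<lambda>x. \<Sum>i\<le>n. a i * x^i)"
    using g(1) real_polynomial_function_iff_sum by blast
  define p where "p = (\<Sum>i\<le>n. monom (a i) i)"
  have pg: "poly p x = g x" for x by (simp add: p_def gs poly_sum poly_monom)
  show ?thesis
  proof (intro exI allI impI)
    fix t :: real assume "\<bar>t\<bar> \<le> r"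
    then have "t \<in> {-r..r}" by auto
    from g(2)[OF this] show "\<bar>poly p t - f t\<bar> < e" by (simp add: pg abs_minus_commute)
  qed
qed

lemma weier_seq:
  fixes f :: "real \<Rightarrow> real"
  assumes "continuous_on UNIV f"
  shows "\<exists>ps :: nat \<Rightarrow> real poly. \<forall>r. uniform_limit {-r..r} (\<lambda>k t. poly (ps k) t) f sequentially"
proof -
  have "\<forall>k. \<exists>p::real poly. \<forall>t. \<bar>t\<bar> \<le> real k \<longrightarrow> \<bar>poly p t - f t\<bar> < 1 / (real k + 1)"
    using weier_poly[OF assms] by simp
  then obtain ps where ps: "\<And>k t. \<bar>t\<bar> \<le> real k \<Longrightarrow> \<bar>poly (ps k) t - f t\<bar> < 1 / (real k + 1)"
    by metis
  show ?thesis
  proof (intro exI allI uniform_limitI)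
    fix r e :: real assume e: "e > 0"
    obtain N :: nat where N: "N \<ge> r" "N \<ge> 1 / e"
      using real_arch_simple[of "max r (1/e)"] by auto
    show "\<forall>\<^sub>F k in sequentially. \<forall>t\<in>{-r..r}. dist (poly (ps k) t) (f t) < e"
      unfolding eventually_sequentially
    proof (intro exI allI impI ballI)
      fix k t assume k: "N \<le> k" and t: "t \<in> {-r..r}"
      have "\<bar>t\<bar> \<le> real k" using t k N by auto
      then have "\<bar>poly (ps k) t - f t\<bar> < 1 / (real k + 1)" by (rule ps)
      also have "1 / (real k + 1) < e"
      proof -
        have "1 / e < real k + 1" using N k by linarith
        then show ?thesis using e by (simp add: field_simps)
      qed
      finally show "dist (poly (ps k) t) (f t) < e" by (simp add: dist_real_def)
    qed
  qed
qed

lemma polymat_sum: "degree p \<le> N \<Longrightarrow> polymat I A p x y = (\<Sum>i\<le>N. complex_of_real (coeff p i) * mpow I A i x y)"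
  unfolding polymat_def by (rule sum.mono_neutral_left) (auto simp: coeff_eq_0)

lemma polymat_diff: "polymat I A (p - q) x y = polymat I A p x y - polymat I A q x y"
proof -
  let ?N = "max (degree p) (degree q)"
  have "degree (p - q) \<le> ?N" by (rule degree_diff_le) auto
  then show ?thesis
    by (simp add: polymat_sum[of _ ?N] sum_subtractf algebra_simps)
qed

definition SBP :: "'a set \<Rightarrow> ('a \<Rightarrow> 'a \<Rightarrow> complex) \<Rightarrow> 'a \<Rightarrow> 'a \<Rightarrow> real \<Rightarrow> bool" where
  "SBP I A x y r \<longleftrightarrow> (\<forall>p \<epsilon>. (\<forall>t. \<bar>t\<bar> \<le> r \<longrightarrow> \<bar>poly p t\<bar> \<le> \<epsilon>) \<longrightarrow> cmod (polymat I A p x y) \<le> \<epsilon>)"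

lemma SBP_diff:
  assumes "SBP I A x y r" "\<And>t. \<bar>t\<bar> \<le> r \<Longrightarrow> \<bar>poly p t - poly q t\<bar> \<le> d"
  shows "cmod (polymat I A p x y - polymat I A q x y) \<le> d"
  using assms unfolding SBP_def by (metis polymat_diff poly_diff)

lemma fcalc_char:
  fixes f :: "real \<Rightarrow> real"
  assumes f: "continuous_on UNIV f" and sb: "SBP I A x y r"
    and pf: "\<And>t. \<bar>t\<bar> \<le> r \<Longrightarrow> \<bar>poly p t - f t\<bar> \<le> \<epsilon>"
  shows "cmod (fcalc I A f x y - polymat I A p x y) \<le> \<epsilon>"
proof -
  obtain ps where ps: "\<And>r. uniform_limit {-r..r} (\<lambda>k t. poly (ps k) t) f sequentially"
    using weier_seq[OF f] by blast
  have un: "\<exists>N. \<forall>n\<ge>N. \<forall>t. \<bar>t\<bar> \<le> r \<longrightarrow> \<bar>poly (qs n) t - f t\<bar> < e"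
    if "\<And>r. uniform_limit {-r..r} (\<lambda>k t. poly (qs k) t) f sequentially" "e > 0" for qs e
  proof -
    from that(1)[of r] that(2) obtain N where "\<forall>n\<ge>N. \<forall>t\<in>{-r..r}. dist (poly (qs n) t) (f t) < e"
      unfolding uniform_limit_sequentially_iff by blast
    then have "\<forall>n\<ge>N. \<forall>t. \<bar>t\<bar> \<le> r \<longrightarrow> \<bar>poly (qs n) t - f t\<bar> < e"
      by (auto simp: dist_real_def abs_le_iff)
    then show ?thesis by blast
  qed
  have close: "\<exists>N. \<forall>n\<ge>N. cmod (polymat I A (qs n) x y - polymat I A (ps n) x y) \<le> e"
    if qsu: "\<And>r. uniform_limit {-r..r} (\<lambda>k t. poly (qs k) t) f sequentially" and ep: "e > 0" for qs e
  proof -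
    obtain N1 where N1: "\<forall>n\<ge>N1. \<forall>t. \<bar>t\<bar> \<le> r \<longrightarrow> \<bar>poly (qs n) t - f t\<bar> < e/2"
      using un[OF qsu, of "e/2"] ep by auto
    obtain N2 where N2: "\<forall>n\<ge>N2. \<forall>t. \<bar>t\<bar> \<le> r \<longrightarrow> \<bar>poly (ps n) t - f t\<bar> < e/2"
      using un[OF ps, of "e/2"] ep by auto
    show ?thesis
    proof (intro exI allI impI)
      fix n assume n: "max N1 N2 \<le> n"
      show "cmod (polymat I A (qs n) x y - polymat I A (ps n) x y) \<le> e"
      proof (rule SBP_diff[OF sb])
        fix t :: real assume t: "\<bar>t\<bar> \<le> r"
        have "\<bar>poly (qs n) t - f t\<bar> < e/2" "\<bar>poly (ps n) t - f t\<bar> < e/2"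
          using N1 N2 n t by auto
        then show "\<bar>poly (qs n) t - poly (ps n) t\<bar> \<le> e" by linarith
      qed
    qed
  qed
  define a where "a k = polymat I A (ps k) x y" for k
  have "Cauchy a"
  proof (rule CauchyI)
    fix e :: real assume e: "e > 0"
    obtain N where N: "\<forall>n\<ge>N. \<forall>t. \<bar>t\<bar> \<le> r \<longrightarrow> \<bar>poly (ps n) t - f t\<bar> < e/3"
      using un[OF ps, of "e/3"] e by auto
    show "\<exists>M. \<forall>m\<ge>M. \<forall>n\<ge>M. cmod (a m - a n) < e"
    proof (intro exI allI impI)
      fix m n assume m: "N \<le> m" and n: "N \<le> n"
      have "cmod (a m - a n) \<le> 2 * e / 3" unfolding a_def
      proof (rule SBP_diff[OF sb])
        fix t :: real assume t: "\<bar>t\<bar> \<le> r"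
        have "\<bar>poly (ps m) t - f t\<bar> < e/3" "\<bar>poly (ps n) t - f t\<bar> < e/3"
          using N m n t by auto
        then show "\<bar>poly (ps m) t - poly (ps n) t\<bar> \<le> 2 * e / 3" by linarith
      qed
      also have "\<dots> < e" using e by simp
      finally show "cmod (a m - a n) < e" .
    qed
  qed
  then obtain c where ac: "a \<longlonglongrightarrow> c" using Cauchy_convergent_iff convergent_def by blast
  have Pc: "(\<lambda>k. polymat I A (qs k) x y) \<longlonglongrightarrow> c"
    if qsu: "\<forall>r. uniform_limit {-r..r} (\<lambda>k t. poly (qs k) t) f sequentially" for qs
  proof (rule LIMSEQ_I)
    fix e :: real assume e: "e > 0"
    obtain N1 where N1: "\<forall>n\<ge>N1. cmod (a n - c) < e/2"
      using LIMSEQ_D[OF ac, of "e/2"] e by auto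
    obtain N2 where N2: "\<forall>n\<ge>N2. cmod (polymat I A (qs n) x y - polymat I A (ps n) x y) \<le> e/3"
      using close[of qs "e/3"] qsu e by auto
    show "\<exists>no. \<forall>n\<ge>no. cmod (polymat I A (qs n) x y - c) < e"
    proof (intro exI allI impI)
      fix n assume n: "max N1 N2 \<le> n"
      have "cmod (polymat I A (qs n) x y - c) \<le> cmod (polymat I A (qs n) x y - a n) + cmod (a n - c)"
        by (metis norm_diff_triangle_ineq diff_add_cancel add_diff_eq diff_diff_eq2 norm_triangle_ineq4 order_refl norm_diff_triangle_le)
      also have "\<dots> < e"
      proof -
        have "cmod (a n - c) < e/2" using N1 n by auto
        moreover have "cmod (polymat I A (qs n) x y - a n) \<le> e/3" using N2 n unfolding a_def by auto
        ultimately show ?thesis using e by linarith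
      qed
      finally show "cmod (polymat I A (qs n) x y - c) < e" .
    qed
  qed
  have fc: "fcalc I A f x y = c"
    unfolding fcalc_def
  proof (rule the_equality)
    show "\<forall>qs. (\<forall>r. uniform_limit {-r..r} (\<lambda>k t. poly (qs k) t) f sequentially) \<longrightarrow>
         (\<lambda>k. polymat I A (qs k) x y) \<longlonglongrightarrow> c" using Pc by blast
  next
    fix c' assume "\<forall>qs. (\<forall>r. uniform_limit {-r..r} (\<lambda>k t. poly (qs k) t) f sequentially) \<longrightarrow>
         (\<lambda>k. polymat I A (qs k) x y) \<longlonglongrightarrow> c'"
    then have "a \<longlonglongrightarrow> c'" using ps unfolding a_def by blast
    then show "c' = c" using ac LIMSEQ_unique by blast
  qed
  show ?thesis unfolding fc
  proof (rule field_le_epsilon)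
    fix d :: real assume d: "d > 0"
    obtain N where N: "\<forall>n\<ge>N. \<forall>t. \<bar>t\<bar> \<le> r \<longrightarrow> \<bar>poly (ps n) t - f t\<bar> < d"
      using un[OF ps d] by blast
    have lim: "(\<lambda>k. cmod (a k - polymat I A p x y)) \<longlonglongrightarrow> cmod (c - polymat I A p x y)"
      by (intro tendsto_norm tendsto_diff ac tendsto_const)
    show "cmod (c - polymat I A p x y) \<le> \<epsilon> + d"
    proof (rule LIMSEQ_le_const2[OF lim], intro exI allI impI)
      fix n assume n: "N \<le> n"
      show "cmod (a n - polymat I A p x y) \<le> \<epsilon> + d" unfolding a_def
      proof (rule SBP_diff[OF sb])
        fix t :: real assume t: "\<bar>t\<bar> \<le> r"
        have "\<bar>poly (ps n) t - f t\<bar> < d" using N n t by auto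
        moreover have "\<bar>poly p t - f t\<bar> \<le> \<epsilon>" using pf t by auto
        ultimately show "\<bar>poly (ps n) t - poly p t\<bar> \<le> \<epsilon> + d" by linarith
      qed
    qed
  qed
qed



section \<open>Schur test\<close>

lemma CS_card:
  assumes "finite F" "\<And>i. i \<in> F \<Longrightarrow> a i \<ge> (0::real)"
  shows "(\<Sum>i\<in>F. a i)\<^sup>2 \<le> real (card F) * (\<Sum>i\<in>F. (a i)\<^sup>2)"
proof -
  have "(\<Sum>i\<in>F. \<bar>a i\<bar> * \<bar>1\<bar>) \<le> L2_set a F * L2_set (\<lambda>_. 1) F" by (rule L2_set_mult_ineq)
  then have "(\<Sum>i\<in>F. a i) \<le> L2_set a F * sqrt (real (card F))"
    using assms(2) by (simp add: L2_set_def)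
  moreover have "(\<Sum>i\<in>F. a i) \<ge> 0" using assms(2) by (simp add: sum_nonneg)
  ultimately have "(\<Sum>i\<in>F. a i)\<^sup>2 \<le> (L2_set a F * sqrt (real (card F)))\<^sup>2"
    by (rule power_mono)
  also have "\<dots> = (\<Sum>i\<in>F. (a i)\<^sup>2) * real (card F)"
    by (simp add: power_mult_distrib L2_set_def sum_nonneg)
  finally show ?thesis by (simp add: mult.commute)
qed

lemma schur_opbound:
  assumes J: "finite J" and B: "B \<ge> 0"
    and ent: "\<And>x y. x \<in> J \<Longrightarrow> y \<in> J \<Longrightarrow> cmod (A x y) \<le> B"
    and row: "\<And>x. x \<in> J \<Longrightarrow> card {y\<in>J. A x y \<noteq> 0} \<le> D"
    and col: "\<And>y. y \<in> J \<Longrightarrow> card {x\<in>J. A x y \<noteq> 0} \<le> D"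
  shows "opbound J A (B * real D)"
  unfolding opbound_def
proof
  fix u :: "'a \<Rightarrow> complex"
  define N where "N x = {y\<in>J. A x y \<noteq> 0}" for x
  have fN: "finite (N x)" for x using J by (simp add: N_def)
  have rowb: "(cmod (mv J A u x))\<^sup>2 \<le> B\<^sup>2 * real D * (\<Sum>y\<in>J. if A x y \<noteq> 0 then (cmod (u y))\<^sup>2 else 0)"
    if x: "x \<in> J" for x
  proof -
    have "mv J A u x = (\<Sum>y\<in>N x. A x y * u y)"
      unfolding mv_def N_def using J by (intro sum.mono_neutral_right) auto
    then have "cmod (mv J A u x) \<le> (\<Sum>y\<in>N x. cmod (A x y) * cmod (u y))"
      by (metis (no_types, lifting) norm_mult norm_sum sum.cong)
    also have "\<dots> \<le> (\<Sum>y\<in>N x. B * cmod (u y))"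
      using ent x by (intro sum_mono mult_right_mono) (auto simp: N_def)
    finally have c1: "cmod (mv J A u x) \<le> (\<Sum>y\<in>N x. B * cmod (u y))" .
    have "(cmod (mv J A u x))\<^sup>2 \<le> (\<Sum>y\<in>N x. B * cmod (u y))\<^sup>2"
      using c1 by (intro power_mono) auto
    also have "\<dots> \<le> real (card (N x)) * (\<Sum>y\<in>N x. (B * cmod (u y))\<^sup>2)"
      using B by (intro CS_card fN) auto
    also have "\<dots> \<le> real D * (\<Sum>y\<in>N x. (B * cmod (u y))\<^sup>2)"
      using row[OF x] by (intro mult_right_mono) (auto simp: N_def sum_nonneg)
    also have "(\<Sum>y\<in>N x. (B * cmod (u y))\<^sup>2) = B\<^sup>2 * (\<Sum>y\<in>J. if A x y \<noteq> 0 then (cmod (u y))\<^sup>2 else 0)"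
    proof -
      have "(\<Sum>y\<in>N x. (B * cmod (u y))\<^sup>2) = (\<Sum>y\<in>J. if A x y \<noteq> 0 then (B * cmod (u y))\<^sup>2 else 0)"
        unfolding N_def using J by (simp add: sum.inter_filter)
      also have "\<dots> = B\<^sup>2 * (\<Sum>y\<in>J. if A x y \<noteq> 0 then (cmod (u y))\<^sup>2 else 0)"
        unfolding sum_distrib_left by (intro sum.cong) (auto simp: power_mult_distrib)
      finally show ?thesis .
    qed
    finally show ?thesis by (simp add: mult_ac)
  qed
  have "(\<Sum>x\<in>J. (cmod (mv J A u x))\<^sup>2) \<le> (\<Sum>x\<in>J. B\<^sup>2 * real D * (\<Sum>y\<in>J. if A x y \<noteq> 0 then (cmod (u y))\<^sup>2 else 0))"
    using rowb by (rule sum_mono)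
  also have "\<dots> = B\<^sup>2 * real D * (\<Sum>x\<in>J. \<Sum>y\<in>J. if A x y \<noteq> 0 then (cmod (u y))\<^sup>2 else 0)"
    by (simp only: sum_distrib_left)
  also have "(\<Sum>x\<in>J. \<Sum>y\<in>J. if A x y \<noteq> 0 then (cmod (u y))\<^sup>2 else 0) = (\<Sum>y\<in>J. \<Sum>x\<in>J. if A x y \<noteq> 0 then (cmod (u y))\<^sup>2 else 0)"
    by (rule sum.swap)
  also have "(\<Sum>y\<in>J. \<Sum>x\<in>J. if A x y \<noteq> 0 then (cmod (u y))\<^sup>2 else 0) = (\<Sum>y\<in>J. real (card {x\<in>J. A x y \<noteq> 0}) * (cmod (u y))\<^sup>2)"
  proof (rule sum.cong)
    fix y assume "y \<in> J"
    have "(\<Sum>x\<in>{x\<in>J. A x y \<noteq> 0}. (cmod (u y))\<^sup>2) = (\<Sum>x\<in>J. if A x y \<noteq> 0 then (cmod (u y))\<^sup>2 else 0)"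
      by (rule sum.inter_filter[OF J])
    then have "(\<Sum>x\<in>J. if A x y \<noteq> 0 then (cmod (u y))\<^sup>2 else 0) = (\<Sum>x\<in>{x\<in>J. A x y \<noteq> 0}. (cmod (u y))\<^sup>2)"
      by simp
    then show "(\<Sum>x\<in>J. if A x y \<noteq> 0 then (cmod (u y))\<^sup>2 else 0) = real (card {x\<in>J. A x y \<noteq> 0}) * (cmod (u y))\<^sup>2"
      by simp
  qed simp
  also have "\<dots> \<le> (\<Sum>y\<in>J. real D * (cmod (u y))\<^sup>2)"
    using col by (intro sum_mono mult_right_mono) auto
  finally have "(\<Sum>x\<in>J. (cmod (mv J A u x))\<^sup>2) \<le> B\<^sup>2 * real D * (\<Sum>y\<in>J. real D * (cmod (u y))\<^sup>2)"
    using B by (simp add: mult_left_mono)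
  also have "\<dots> = (B * real D)\<^sup>2 * (\<Sum>x\<in>J. (cmod (u x))\<^sup>2)"
    by (simp add: sum_distrib_left power_mult_distrib power2_eq_square mult_ac)
  finally show "(\<Sum>x\<in>J. (cmod (mv J A u x))\<^sup>2) \<le> (B * real D)\<^sup>2 * (\<Sum>x\<in>J. (cmod (u x))\<^sup>2)" .
qed

section \<open>Locality and isomorphism\<close>

lemma mpow_local:
  assumes JI: "J \<subseteq> I" and LJ: "\<And>k. k < K \<Longrightarrow> L k \<subseteq> J"
    and step: "\<And>k x z. k < K \<Longrightarrow> x \<in> L (Suc k) \<Longrightarrow> z \<in> I \<Longrightarrow> A x z \<noteq> 0 \<Longrightarrow> z \<in> L k"
  shows "k \<le> K \<Longrightarrow> x \<in> L k \<Longrightarrow> y \<in> J \<Longrightarrow> mpow I A k x y = mpow J A k x y"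
proof (induction k arbitrary: x)
  case 0
  then show ?case by simp
next
  case (Suc k)
  have "mpow I A (Suc k) x y = infsum (\<lambda>z. A x z * mpow I A k z y) I" by (simp add: mmult_def)
  also have "\<dots> = infsum (\<lambda>z. A x z * mpow I A k z y) J"
  proof (rule infsum_cong_neutral)
    fix z assume "z \<in> I - J"
    then have "A x z = 0" using step[of k x z] Suc.prems LJ[of k] by auto
    then show "A x z * mpow I A k z y = 0" by simp
  qed (use JI in auto)
  also have "\<dots> = infsum (\<lambda>z. A x z * mpow J A k z y) J"
  proof (rule infsum_cong)
    fix z assume z: "z \<in> J"
    show "A x z * mpow I A k z y = A x z * mpow J A k z y"
    proof (cases "A x z = 0")
      case False
      then have "z \<in> L k" using step[of k x z] Suc.prems z JI by auto
      then show ?thesis using Suc.IH[of z] Suc.prems by simp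
    qed simp
  qed
  also have "\<dots> = mpow J A (Suc k) x y" by (simp add: mmult_def)
  finally show ?case .
qed

lemma polymat_local:
  assumes JI: "J \<subseteq> I" and LJ: "\<And>k. k < K \<Longrightarrow> L k \<subseteq> J"
    and step: "\<And>k x z. k < K \<Longrightarrow> x \<in> L (Suc k) \<Longrightarrow> z \<in> I \<Longrightarrow> A x z \<noteq> 0 \<Longrightarrow> z \<in> L k"
    and x: "\<And>k. k \<le> K \<Longrightarrow> x \<in> L k" and y: "y \<in> J" and d: "degree p \<le> K"
  shows "polymat I A p x y = polymat J A p x y"
  unfolding polymat_def
  using mpow_local[OF JI LJ step, where x=x and y=y] x y d by (intro sum.cong) auto

lemma mpow_iso:
  assumes J2: "finite J2" and bij: "bij_betw \<phi> J2 J1"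
    and ent: "\<And>a b. a \<in> J2 \<Longrightarrow> b \<in> J2 \<Longrightarrow> A1 (\<phi> a) (\<phi> b) = A2 a b"
  shows "a \<in> J2 \<Longrightarrow> b \<in> J2 \<Longrightarrow> mpow J1 A1 k (\<phi> a) (\<phi> b) = mpow J2 A2 k a b"
proof (induction k arbitrary: a)
  case 0
  have "\<phi> a = \<phi> b \<longleftrightarrow> a = b" using bij 0 by (metis bij_betw_def inj_on_def)
  then show ?case by simp
next
  case (Suc k)
  have J1: "J1 = \<phi> ` J2" and inj: "inj_on \<phi> J2" using bij by (auto simp: bij_betw_def)
  have fJ1: "finite J1" using J1 J2 by simp
  have "mpow J1 A1 (Suc k) (\<phi> a) (\<phi> b) = (\<Sum>z\<in>\<phi> ` J2. A1 (\<phi> a) z * mpow J1 A1 k z (\<phi> b))"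
    using fJ1 J1 by (simp add: mmult_def)
  also have "\<dots> = (\<Sum>c\<in>J2. A1 (\<phi> a) (\<phi> c) * mpow J1 A1 k (\<phi> c) (\<phi> b))"
    using inj by (simp add: sum.reindex)
  also have "\<dots> = (\<Sum>c\<in>J2. A2 a c * mpow J2 A2 k c b)"
    using Suc ent by (intro sum.cong) auto
  also have "\<dots> = mpow J2 A2 (Suc k) a b" using J2 by (simp add: mmult_def)
  finally show ?case .
qed

lemma polymat_iso:
  assumes J2: "finite J2" and bij: "bij_betw \<phi> J2 J1"
    and ent: "\<And>a b. a \<in> J2 \<Longrightarrow> b \<in> J2 \<Longrightarrow> A1 (\<phi> a) (\<phi> b) = A2 a b"
    and a: "a \<in> J2" and b: "b \<in> J2"
  shows "polymat J1 A1 p (\<phi> a) (\<phi> b) = polymat J2 A2 p a b"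
proof -
  have "\<And>k. mpow J1 A1 k (\<phi> a) (\<phi> b) = mpow J2 A2 k a b"
    by (rule mpow_iso[OF J2 bij]) (use ent a b in auto)
  then show ?thesis unfolding polymat_def by simp
qed

section \<open>Word length\<close>

lemma wlen_ex: assumes "generates S"
  shows "\<exists>xs. length xs = wlen S g \<and> set xs \<subseteq> S \<and> sum_list xs = g"
proof -
  obtain xs where "set xs \<subseteq> S \<and> sum_list xs = g" using assms unfolding generates_def by blast
  then have "\<exists>n xs. length xs = n \<and> set xs \<subseteq> S \<and> sum_list xs = g" by blast
  then show ?thesis unfolding wlen_def by (rule LeastI_ex)
qed

lemma wlen_le: "set xs \<subseteq> S \<Longrightarrow> sum_list xs = g \<Longrightarrow> wlen S g \<le> length xs"
  unfolding wlen_def by (rule Least_le) blast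

lemma wlen_0[simp]: "wlen S 0 = 0"
  using wlen_le[of "[]" S 0] by simp

lemma wlen_add: assumes "generates S" shows "wlen S (a + b) \<le> wlen S a + wlen S b"
proof -
  obtain xs where xs: "length xs = wlen S a" "set xs \<subseteq> S" "sum_list xs = a" using wlen_ex[OF assms] by blast
  obtain ys where ys: "length ys = wlen S b" "set ys \<subseteq> S" "sum_list ys = b" using wlen_ex[OF assms] by blast
  have "wlen S (a + b) \<le> length (xs @ ys)" using xs ys by (intro wlen_le) auto
  then show ?thesis using xs ys by simp
qed

lemma sum_list_rev_neg: "sum_list (rev (map uminus xs)) = - sum_list (xs :: 'g::group_add list)"
  by (induction xs) (auto simp: minus_add)

lemma wlen_uminus_le: assumes "generates S" "\<forall>s\<in>S. - s \<in> S" shows "wlen S (- a) \<le> wlen S a"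
proof -
  obtain xs where xs: "length xs = wlen S a" "set xs \<subseteq> S" "sum_list xs = a" using wlen_ex[OF assms(1)] by blast
  have "wlen S (- a) \<le> length (rev (map uminus xs))"
    using xs assms(2) by (intro wlen_le) (auto simp: sum_list_rev_neg)
  then show ?thesis using xs by simp
qed

lemma wlen_uminus: assumes "generates S" "\<forall>s\<in>S. - s \<in> S" shows "wlen S (- a) = wlen S a"
  using wlen_uminus_le[OF assms, of a] wlen_uminus_le[OF assms, of "-a"] by simp

lemma wlen_gen: "s \<in> S \<Longrightarrow> wlen S s \<le> 1"
  using wlen_le[of "[s]" S s] by simp

lemma ballS_finite: assumes "finite S" "generates S" shows "finite (ballS S R)"
proof -
  have "ballS S R \<subseteq> sum_list ` {xs. set xs \<subseteq> S \<and> length xs \<le> R}"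
  proof
    fix g assume "g \<in> ballS S R"
    then have "wlen S g \<le> R" by (simp add: ballS_def)
    moreover obtain xs where "length xs = wlen S g" "set xs \<subseteq> S" "sum_list xs = g" using wlen_ex[OF assms(2)] by blast
    ultimately show "g \<in> sum_list ` {xs. set xs \<subseteq> S \<and> length xs \<le> R}" by force
  qed
  moreover have "finite {xs. set xs \<subseteq> S \<and> length xs \<le> R}" by (rule finite_lists_length_le[OF assms(1)])
  ultimately show ?thesis by (meson finite_surj)
qed



definition loc :: "'g::group_add set \<Rightarrow> (nat \<Rightarrow> 'v set) \<Rightarrow> (nat \<Rightarrow> 'g \<Rightarrow> 'v \<Rightarrow> 'v) \<Rightarrow> nat \<Rightarrow> nat \<Rightarrow> 'v \<Rightarrow> bool" where
  "loc S V \<sigma> n T w \<longleftrightarrow> w \<in> V n \<and>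
     (\<forall>h a. wlen S h + wlen S a \<le> T \<longrightarrow> \<sigma> n h (\<sigma> n a w) = \<sigma> n (h + a) w) \<and>
     (\<forall>a b. wlen S a \<le> T \<and> wlen S b \<le> T \<and> \<sigma> n a w = \<sigma> n b w \<longrightarrow> a = b)"

definition SN :: "'g::group_add set \<Rightarrow> (nat \<Rightarrow> 'v set) \<Rightarrow> (nat \<Rightarrow> 'g \<Rightarrow> 'v \<Rightarrow> 'v) \<Rightarrow> nat \<Rightarrow> nat \<Rightarrow> 'v \<Rightarrow> bool" where
  "SN S V \<sigma> n T v \<longleftrightarrow> v \<in> V n \<and> (\<forall>h\<in>ballS S (2*T). \<forall>a\<in>ballS S (2*T). \<sigma> n h (\<sigma> n a v) = \<sigma> n (h + a) v) \<and>
     (\<forall>g\<in>ballS S (2*T). g \<noteq> 0 \<longrightarrow> \<sigma> n g v \<noteq> v)"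

lemma dE_le_mono: "dE_le S V \<sigma> n x y R \<Longrightarrow> R \<le> R' \<Longrightarrow> dE_le S V \<sigma> n x y R'"
proof -
  assume d: "dE_le S V \<sigma> n x y R" and RR: "R \<le> R'"
  then obtain p k where "k \<le> R" "p 0 = x" "p k = y" "\<forall>i\<le>k. p i \<in> V n"
    "\<forall>i<k. \<exists>s\<in>S. p (Suc i) = \<sigma> n s (p i) \<or> p i = \<sigma> n s (p (Suc i))"
    unfolding dE_le_def by blast
  moreover have "k \<le> R'" using \<open>k \<le> R\<close> RR by simp
  ultimately show ?thesis unfolding dE_le_def by blast
qed

context
  fixes S :: "'g::group_add set" and V :: "nat \<Rightarrow> 'v set" and \<sigma> :: "nat \<Rightarrow> 'g \<Rightarrow> 'v \<Rightarrow> 'v" and n :: nat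
  assumes gen: "generates S" and sym: "\<forall>s\<in>S. - s \<in> S" and bij: "\<forall>g. bij_betw (\<sigma> n g) (V n) (V n)"
begin

lemma sig_in: "w \<in> V n \<Longrightarrow> \<sigma> n g w \<in> V n"
  using bij by (meson bij_betwE)

lemma sig_inj: "x \<in> V n \<Longrightarrow> y \<in> V n \<Longrightarrow> \<sigma> n g x = \<sigma> n g y \<Longrightarrow> x = y"
  using bij by (meson bij_betw_imp_inj_on inj_onD)

lemma loc_0: "loc S V \<sigma> n T w \<Longrightarrow> \<sigma> n 0 w = w"
proof -
  assume l: "loc S V \<sigma> n T w"
  then have w: "w \<in> V n" by (simp add: loc_def)
  from l have "\<sigma> n 0 (\<sigma> n 0 w) = \<sigma> n (0 + 0) w" unfolding loc_def by (metis wlen_0 add_0 le0)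
  then have "\<sigma> n 0 (\<sigma> n 0 w) = \<sigma> n 0 w" by simp
  then show ?thesis using sig_inj[OF sig_in[OF w] w] by blast
qed

lemma loc_shift: assumes l: "loc S V \<sigma> n T v" and g: "wlen S g + T' \<le> T"
  shows "loc S V \<sigma> n T' (\<sigma> n g v)"
proof -
  have v: "v \<in> V n" and A1: "\<And>h a. wlen S h + wlen S a \<le> T \<Longrightarrow> \<sigma> n h (\<sigma> n a v) = \<sigma> n (h + a) v"
    and A2: "\<And>a b. wlen S a \<le> T \<Longrightarrow> wlen S b \<le> T \<Longrightarrow> \<sigma> n a v = \<sigma> n b v \<Longrightarrow> a = b"
    using l unfolding loc_def by blast+
  have "\<sigma> n g v \<in> V n" by (rule sig_in[OF v])
  moreover have "\<sigma> n h (\<sigma> n a (\<sigma> n g v)) = \<sigma> n (h + a) (\<sigma> n g v)" if ha: "wlen S h + wlen S a \<le> T'" for h a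
  proof -
    have w1: "wlen S (a + g) \<le> wlen S a + wlen S g" by (rule wlen_add[OF gen])
    have w2: "wlen S (h + a) \<le> wlen S h + wlen S a" by (rule wlen_add[OF gen])
    have "\<sigma> n h (\<sigma> n a (\<sigma> n g v)) = \<sigma> n h (\<sigma> n (a + g) v)" using A1[of a g] ha g by simp
    also have "\<dots> = \<sigma> n (h + (a + g)) v" using A1[of h "a + g"] ha g w1 by simp
    also have "\<dots> = \<sigma> n ((h + a) + g) v" by (simp add: add.assoc)
    also have "\<dots> = \<sigma> n (h + a) (\<sigma> n g v)" using A1[of "h + a" g] ha g w2 by simp
    finally show ?thesis .
  qed
  moreover have "a = b" if ab: "wlen S a \<le> T'" "wlen S b \<le> T'" "\<sigma> n a (\<sigma> n g v) = \<sigma> n b (\<sigma> n g v)" for a b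
  proof -
    have "\<sigma> n (a + g) v = \<sigma> n (b + g) v" using ab A1[of a g] A1[of b g] g by simp
    moreover have "wlen S (a + g) \<le> T" "wlen S (b + g) \<le> T"
      using wlen_add[OF gen, of a g] wlen_add[OF gen, of b g] ab g by linarith+
    ultimately have "a + g = b + g" using A2 by blast
    then show ?thesis by simp
  qed
  ultimately show ?thesis unfolding loc_def by blast
qed

lemma walk_word: assumes l: "loc S V \<sigma> n T w" and d: "dE_le S V \<sigma> n w y k" and kT: "k < T"
  shows "\<exists>h. wlen S h \<le> k \<and> y = \<sigma> n h w"
proof -
  have w: "w \<in> V n" and A1: "\<And>h a. wlen S h + wlen S a \<le> T \<Longrightarrow> \<sigma> n h (\<sigma> n a w) = \<sigma> n (h + a) w"
    using l unfolding loc_def by blast+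
  obtain p k' where p: "k' \<le> k" "p 0 = w" "p k' = y" "\<forall>i\<le>k'. p i \<in> V n"
    "\<forall>i<k'. \<exists>s\<in>S. p (Suc i) = \<sigma> n s (p i) \<or> p i = \<sigma> n s (p (Suc i))"
    using d unfolding dE_le_def by blast
  have "i \<le> k' \<Longrightarrow> \<exists>h. wlen S h \<le> i \<and> p i = \<sigma> n h w" for i
  proof (induction i)
    case 0
    then show ?case using p(2) loc_0[OF l] by (intro exI[of _ 0]) simp
  next
    case (Suc i)
    then obtain h where h: "wlen S h \<le> i" "p i = \<sigma> n h w" by auto
    obtain s where s: "s \<in> S" "p (Suc i) = \<sigma> n s (p i) \<or> p i = \<sigma> n s (p (Suc i))"
      using p(5) Suc.prems by (meson Suc_le_lessD)
    have ws: "wlen S s \<le> 1" by (rule wlen_gen[OF s(1)])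
    show ?case
    proof (cases "p (Suc i) = \<sigma> n s (p i)")
      case True
      have "p (Suc i) = \<sigma> n (s + h) w" using True h A1[of s h] ws Suc.prems p(1) kT by simp
      moreover have "wlen S (s + h) \<le> Suc i" using wlen_add[OF gen, of s h] ws h by linarith
      ultimately show ?thesis by blast
    next
      case False
      then have e: "p i = \<sigma> n s (p (Suc i))" using s by blast
      have wms: "wlen S (- s) \<le> 1" using wlen_uminus[OF gen sym, of s] ws by simp
      have w2: "wlen S (- s + h) \<le> Suc i" using wlen_add[OF gen, of "-s" h] wms h by linarith
      have "\<sigma> n s (\<sigma> n (- s + h) w) = \<sigma> n (s + (- s + h)) w"
        using A1[of s "- s + h"] ws w2 Suc.prems p(1) kT by simp
      also have "\<dots> = p i" using h by (simp add: add.assoc[symmetric])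
      finally have "\<sigma> n s (\<sigma> n (- s + h) w) = \<sigma> n s (p (Suc i))" using e by simp
      moreover have "\<sigma> n (- s + h) w \<in> V n" by (rule sig_in[OF w])
      moreover have "p (Suc i) \<in> V n" using p(4) Suc.prems by simp
      ultimately have "p (Suc i) = \<sigma> n (- s + h) w" using sig_inj by metis
      then show ?thesis using w2 by blast
    qed
  qed
  from this[of k'] p(1,3) show ?thesis by (meson order_trans order_refl)
qed

lemma walk_ext: assumes "dE_le S V \<sigma> n x y R" "s \<in> S"
  shows "dE_le S V \<sigma> n x (\<sigma> n s y) (Suc R)"
proof -
  obtain p k where p: "k \<le> R" "p 0 = x" "p k = y" "\<forall>i\<le>k. p i \<in> V n"
    "\<forall>i<k. \<exists>s\<in>S. p (Suc i) = \<sigma> n s (p i) \<or> p i = \<sigma> n s (p (Suc i))"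
    using assms(1) unfolding dE_le_def by blast
  define p' where "p' i = (if i \<le> k then p i else \<sigma> n s y)" for i
  have "Suc k \<le> Suc R" "p' 0 = x" "p' (Suc k) = \<sigma> n s y" using p by (auto simp: p'_def)
  moreover have "\<forall>i\<le>Suc k. p' i \<in> V n"
    using p sig_in by (auto simp: p'_def le_Suc_eq)
  moreover have "\<forall>i<Suc k. \<exists>s'\<in>S. p' (Suc i) = \<sigma> n s' (p' i) \<or> p' i = \<sigma> n s' (p' (Suc i))"
  proof (intro allI impI)
    fix i assume i: "i < Suc k"
    show "\<exists>s'\<in>S. p' (Suc i) = \<sigma> n s' (p' i) \<or> p' i = \<sigma> n s' (p' (Suc i))"
    proof (cases "i < k")
      case True
      then show ?thesis using p(5) by (auto simp: p'_def)
    next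
      case False
      then have "i = k" using i by simp
      then show ?thesis using assms(2) p(3) by (auto simp: p'_def)
    qed
  qed
  ultimately show ?thesis unfolding dE_le_def by blast
qed

lemma word_walk: assumes l: "loc S V \<sigma> n T w"
  shows "set xs \<subseteq> S \<Longrightarrow> length xs \<le> T \<Longrightarrow> dE_le S V \<sigma> n w (\<sigma> n (sum_list xs) w) (length xs)"
proof (induction xs)
  case Nil
  have w: "w \<in> V n" using l by (simp add: loc_def)
  show ?case unfolding dE_le_def using loc_0[OF l] w
    by (intro exI[of _ "\<lambda>_. w"] exI[of _ 0]) simp
next
  case (Cons s xs)
  have A1: "\<And>h a. wlen S h + wlen S a \<le> T \<Longrightarrow> \<sigma> n h (\<sigma> n a w) = \<sigma> n (h + a) w"
    using l unfolding loc_def by blast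
  have ws: "wlen S s \<le> 1" using Cons.prems wlen_gen by auto
  have wx: "wlen S (sum_list xs) \<le> length xs" using Cons.prems by (intro wlen_le) auto
  have "\<sigma> n (sum_list (s # xs)) w = \<sigma> n s (\<sigma> n (sum_list xs) w)"
    using A1[of s "sum_list xs"] ws wx Cons.prems by simp
  moreover have "dE_le S V \<sigma> n w (\<sigma> n s (\<sigma> n (sum_list xs) w)) (Suc (length xs))"
    using Cons by (intro walk_ext) auto
  ultimately show ?case by simp
qed

lemma word_walk2: assumes l: "loc S V \<sigma> n T w" and h: "wlen S h \<le> k" and kT: "k \<le> T"
  shows "dE_le S V \<sigma> n w (\<sigma> n h w) k"
proof -
  obtain xs where xs: "length xs = wlen S h" "set xs \<subseteq> S" "sum_list xs = h" using wlen_ex[OF gen] by blast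
  have "dE_le S V \<sigma> n w (\<sigma> n h w) (length xs)"
    using word_walk[OF l xs(2)] xs h kT by simp
  then show ?thesis using xs h dE_le_mono by metis
qed

lemma ballE_loc: assumes l: "loc S V \<sigma> n T w" and RT: "R < T"
  shows "ballE S V \<sigma> n w R = (\<lambda>a. \<sigma> n a w) ` ballS S R"
proof
  show "ballE S V \<sigma> n w R \<subseteq> (\<lambda>a. \<sigma> n a w) ` ballS S R"
    using walk_word[OF l _ RT] by (auto simp: ballE_def ballS_def)
  show "(\<lambda>a. \<sigma> n a w) ` ballS S R \<subseteq> ballE S V \<sigma> n w R"
  proof
    fix y assume "y \<in> (\<lambda>a. \<sigma> n a w) ` ballS S R"
    then obtain a where a: "wlen S a \<le> R" "y = \<sigma> n a w" by (auto simp: ballS_def)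
    have "y \<in> V n" using a l sig_in by (auto simp: loc_def)
    moreover have "dE_le S V \<sigma> n w y R" using word_walk2[OF l a(1)] RT a(2) by simp
    ultimately show "y \<in> ballE S V \<sigma> n w R" by (simp add: ballE_def)
  qed
qed

lemma good_loc: assumes l: "loc S V \<sigma> n T w" and RT: "R < T"
  shows "good S V \<sigma> n R w"
proof -
  have w: "w \<in> V n" and A1: "\<And>h a. wlen S h + wlen S a \<le> T \<Longrightarrow> \<sigma> n h (\<sigma> n a w) = \<sigma> n (h + a) w"
    and A2: "\<And>a b. wlen S a \<le> T \<Longrightarrow> wlen S b \<le> T \<Longrightarrow> \<sigma> n a w = \<sigma> n b w \<Longrightarrow> a = b"
    using l unfolding loc_def by blast+
  define \<psi> where "\<psi> a = \<sigma> n a w" for a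
  have inj: "inj_on \<psi> (ballS S R)"
    unfolding inj_on_def \<psi>_def using A2 RT by (auto simp: ballS_def)
  have bE: "ballE S V \<sigma> n w R = \<psi> ` ballS S R" unfolding \<psi>_def by (rule ballE_loc[OF l RT])
  have bij1: "bij_betw \<psi> (ballS S R) (ballE S V \<sigma> n w R)" using inj bE by (simp add: bij_betw_def)
  define \<phi> where "\<phi> = the_inv_into (ballS S R) \<psi>"
  have bij2: "bij_betw \<phi> (ballE S V \<sigma> n w R) (ballS S R)"
    unfolding \<phi>_def using bij1 by (simp add: bij_betw_the_inv_into)
  have z: "0 \<in> ballS S R" by (simp add: ballS_def)
  have "\<psi> 0 = w" unfolding \<psi>_def by (rule loc_0[OF l])
  then have phi0: "\<phi> w = 0" unfolding \<phi>_def using the_inv_into_f_f[OF inj z] by simp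
  have lab: "y = \<sigma> n s x \<longleftrightarrow> \<phi> y = s + \<phi> x"
    if x: "x \<in> ballE S V \<sigma> n w R" and y: "y \<in> ballE S V \<sigma> n w R" and s: "s \<in> S" for x y s
  proof -
    have ax: "\<phi> x \<in> ballS S R" "\<psi> (\<phi> x) = x"
      using x bE inj unfolding \<phi>_def by (auto intro: the_inv_into_into f_the_inv_into_f)
    have ay: "\<phi> y \<in> ballS S R" "\<psi> (\<phi> y) = y"
      using y bE inj unfolding \<phi>_def by (auto intro: the_inv_into_into f_the_inv_into_f)
    have ws: "wlen S s \<le> 1" by (rule wlen_gen[OF s])
    have "\<sigma> n s x = \<psi> (s + \<phi> x)"
      using A1[of s "\<phi> x"] ax ws RT unfolding \<psi>_def by (auto simp: ballS_def)
    moreover have "wlen S (s + \<phi> x) \<le> T" using wlen_add[OF gen, of s "\<phi> x"] ax ws RT by (auto simp: ballS_def)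
    moreover have "wlen S (\<phi> y) \<le> T" using ay RT by (auto simp: ballS_def)
    ultimately show ?thesis using A2[of "\<phi> y" "s + \<phi> x"] ay(2) unfolding \<psi>_def by metis
  qed
  show ?thesis unfolding good_def using w bij2 phi0 lab by blast
qed

lemma SN_loc: assumes "SN S V \<sigma> n T v" shows "loc S V \<sigma> n T v"
proof -
  have v: "v \<in> V n" and B1: "\<And>h a. wlen S h \<le> 2*T \<Longrightarrow> wlen S a \<le> 2*T \<Longrightarrow> \<sigma> n h (\<sigma> n a v) = \<sigma> n (h + a) v"
    and B2: "\<And>g. wlen S g \<le> 2*T \<Longrightarrow> g \<noteq> 0 \<Longrightarrow> \<sigma> n g v \<noteq> v"
    using assms unfolding SN_def ballS_def by auto
  have s0: "\<sigma> n 0 v = v"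
  proof -
    have "\<sigma> n 0 (\<sigma> n 0 v) = \<sigma> n 0 v" using B1[of 0 0] by simp
    then show ?thesis using sig_inj[OF sig_in[OF v] v] by blast
  qed
  have "a = b" if ab: "wlen S a \<le> T" "wlen S b \<le> T" "\<sigma> n a v = \<sigma> n b v" for a b
  proof (rule ccontr)
    assume ne: "a \<noteq> b"
    have wb: "wlen S (- b) \<le> 2*T" using wlen_uminus[OF gen sym, of b] ab by simp
    have "\<sigma> n (- b + a) v = \<sigma> n (- b) (\<sigma> n a v)" using B1[of "-b" a] wb ab by simp
    also have "\<dots> = \<sigma> n (- b) (\<sigma> n b v)" using ab by simp
    also have "\<dots> = v" using B1[of "-b" b] wb ab s0 by simp
    finally have e: "\<sigma> n (- b + a) v = v" .
    have "wlen S (- b + a) \<le> 2*T" using wlen_add[OF gen, of "-b" a] wlen_uminus[OF gen sym, of b] ab by linarith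
    moreover have "- b + a \<noteq> 0" using ne by (metis add_minus_cancel add.right_neutral)
    ultimately show False using B2 e by blast
  qed
  moreover have "\<sigma> n h (\<sigma> n a v) = \<sigma> n (h + a) v" if "wlen S h + wlen S a \<le> T" for h a
    using B1 that by simp
  ultimately show ?thesis unfolding loc_def using v by blast
qed

end



lemma card_filter_compl: "finite A \<Longrightarrow> card {x\<in>A. P x} + card {x\<in>A. \<not> P x} = card A"
proof -
  assume A: "finite A"
  have "card ({x\<in>A. P x} \<union> {x\<in>A. \<not> P x}) = card {x\<in>A. P x} + card {x\<in>A. \<not> P x}"
    using A by (intro card_Un_disjoint) auto
  moreover have "{x\<in>A. P x} \<union> {x\<in>A. \<not> P x} = A" by auto
  ultimately show ?thesis by simp
qed

lemma ratio_compl: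
  assumes fin: "\<And>n. finite (A n)"
    and lim: "(\<lambda>n. real (card {x\<in>A n. P n x}) / real (card (A n))) \<longlonglongrightarrow> 1"
  shows "(\<lambda>n. real (card {x\<in>A n. \<not> P n x}) / real (card (A n))) \<longlonglongrightarrow> 0"
proof (rule tendsto_sandwich[where f="\<lambda>_. 0" and h="\<lambda>n. \<bar>1 - real (card {x\<in>A n. P n x}) / real (card (A n))\<bar>"])
  show "\<forall>\<^sub>F n in sequentially. 0 \<le> real (card {x\<in>A n. \<not> P n x}) / real (card (A n))" by simp
  show "\<forall>\<^sub>F n in sequentially. real (card {x\<in>A n. \<not> P n x}) / real (card (A n)) \<le>
      \<bar>1 - real (card {x\<in>A n. P n x}) / real (card (A n))\<bar>"
  proof (rule always_eventually, rule allI)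
    fix n
    show "real (card {x\<in>A n. \<not> P n x}) / real (card (A n)) \<le> \<bar>1 - real (card {x\<in>A n. P n x}) / real (card (A n))\<bar>"
    proof (cases "card (A n) = 0")
      case True
      then show ?thesis by simp
    next
      case False
      have "real (card {x\<in>A n. \<not> P n x}) = real (card (A n)) - real (card {x\<in>A n. P n x})"
        using card_filter_compl[OF fin[of n], of "P n"] by linarith
      then have "real (card {x\<in>A n. \<not> P n x}) / real (card (A n)) = 1 - real (card {x\<in>A n. P n x}) / real (card (A n))"
        using False by (simp add: diff_divide_distrib)
      then show ?thesis by simp
    qed
  qed
  show "(\<lambda>n. 0) \<longlonglongrightarrow> (0::real)" by simp
  have "(\<lambda>n. 1 - real (card {x\<in>A n. P n x}) / real (card (A n))) \<longlonglongrightarrow> 1 - 1"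
    by (intro tendsto_diff tendsto_const lim)
  then show "(\<lambda>n. \<bar>1 - real (card {x\<in>A n. P n x}) / real (card (A n))\<bar>) \<longlonglongrightarrow> 0"
    using tendsto_rabs_zero by fastforce
qed

lemma SN_density:
  fixes S :: "'g::group_add set" and V :: "nat \<Rightarrow> 'v set" and \<sigma> :: "nat \<Rightarrow> 'g \<Rightarrow> 'v \<Rightarrow> 'v"
  assumes sof: "sofic_approx V \<sigma>" and fS: "finite S" and gen: "generates S"
  shows "(\<lambda>n. real (card {v\<in>V n. \<not> SN S V \<sigma> n T v}) / real (card (V n))) \<longlonglongrightarrow> 0"
proof -
  define B where "B = ballS S (2*T)"
  have fB: "finite B" unfolding B_def by (rule ballS_finite[OF fS gen])
  have fin: "\<And>n. finite (V n)" using sof by (simp add: sofic_approx_def)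
  define E1 where "E1 n q = {v\<in>V n. \<not> (\<sigma> n (fst q) (\<sigma> n (snd q) v) = \<sigma> n (fst q + snd q) v)}" for n q
  define E2 where "E2 n g = {v\<in>V n. \<not> (\<sigma> n g v \<noteq> v)}" for n g
  have r1: "(\<lambda>n. real (card (E1 n q)) / real (card (V n))) \<longlonglongrightarrow> 0" for q
    unfolding E1_def
    by (rule ratio_compl[OF fin]) (use sof in \<open>simp add: sofic_approx_def\<close>)
  have r2: "(\<lambda>n. real (card (E2 n g)) / real (card (V n))) \<longlonglongrightarrow> 0" if "g \<noteq> 0" for g
    unfolding E2_def
    by (rule ratio_compl[OF fin]) (use sof that in \<open>simp add: sofic_approx_def\<close>)
  have sub: "{v\<in>V n. \<not> SN S V \<sigma> n T v} \<subseteq> (\<Union>q\<in>B \<times> B. E1 n q) \<union> (\<Union>g\<in>B - {0}. E2 n g)" for n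
    unfolding SN_def B_def E1_def E2_def by auto
  have cb: "real (card {v\<in>V n. \<not> SN S V \<sigma> n T v}) / real (card (V n)) \<le>
     (\<Sum>q\<in>B \<times> B. real (card (E1 n q)) / real (card (V n))) + (\<Sum>g\<in>B - {0}. real (card (E2 n g)) / real (card (V n)))" for n
  proof -
    have sV: "(\<Union>q\<in>B \<times> B. E1 n q) \<union> (\<Union>g\<in>B - {0}. E2 n g) \<subseteq> V n"
      unfolding E1_def E2_def by blast
    have "card {v\<in>V n. \<not> SN S V \<sigma> n T v} \<le> card ((\<Union>q\<in>B \<times> B. E1 n q) \<union> (\<Union>g\<in>B - {0}. E2 n g))"
      by (rule card_mono[OF finite_subset[OF sV fin] sub])
    also have "\<dots> \<le> card (\<Union>q\<in>B \<times> B. E1 n q) + card (\<Union>g\<in>B - {0}. E2 n g)" by (rule card_Un_le)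
    also have "\<dots> \<le> (\<Sum>q\<in>B \<times> B. card (E1 n q)) + (\<Sum>g\<in>B - {0}. card (E2 n g))"
      using fB by (intro add_mono card_UN_le) simp_all
    finally have c: "card {v\<in>V n. \<not> SN S V \<sigma> n T v} \<le> (\<Sum>q\<in>B \<times> B. card (E1 n q)) + (\<Sum>g\<in>B - {0}. card (E2 n g))" .
    have "real (card {v\<in>V n. \<not> SN S V \<sigma> n T v}) \<le> real ((\<Sum>q\<in>B \<times> B. card (E1 n q)) + (\<Sum>g\<in>B - {0}. card (E2 n g)))"
      using c by (simp only: of_nat_le_iff)
    also have "\<dots> = (\<Sum>q\<in>B \<times> B. real (card (E1 n q))) + (\<Sum>g\<in>B - {0}. real (card (E2 n g)))"
      by (simp only: of_nat_add of_nat_sum)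
    finally have c2: "real (card {v\<in>V n. \<not> SN S V \<sigma> n T v}) \<le> (\<Sum>q\<in>B \<times> B. real (card (E1 n q))) + (\<Sum>g\<in>B - {0}. real (card (E2 n g)))" .
    have "real (card {v\<in>V n. \<not> SN S V \<sigma> n T v}) / real (card (V n)) \<le> ((\<Sum>q\<in>B \<times> B. real (card (E1 n q))) + (\<Sum>g\<in>B - {0}. real (card (E2 n g)))) / real (card (V n))"
      by (rule divide_right_mono[OF c2]) simp
    also have "\<dots> = (\<Sum>q\<in>B \<times> B. real (card (E1 n q)) / real (card (V n))) + (\<Sum>g\<in>B - {0}. real (card (E2 n g)) / real (card (V n)))"
      by (simp only: add_divide_distrib sum_divide_distrib)
    finally show ?thesis .
  qed
  show ?thesis
  proof (rule tendsto_sandwich[where f="\<lambda>_. 0"])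
    show "\<forall>\<^sub>F n in sequentially. 0 \<le> real (card {v\<in>V n. \<not> SN S V \<sigma> n T v}) / real (card (V n))" by simp
    show "\<forall>\<^sub>F n in sequentially. real (card {v\<in>V n. \<not> SN S V \<sigma> n T v}) / real (card (V n)) \<le>
      (\<Sum>q\<in>B \<times> B. real (card (E1 n q)) / real (card (V n))) + (\<Sum>g\<in>B - {0}. real (card (E2 n g)) / real (card (V n)))"
      using cb by simp
    show "(\<lambda>n. 0) \<longlonglongrightarrow> (0::real)" by simp
    have "(\<lambda>n. (\<Sum>q\<in>B \<times> B. real (card (E1 n q)) / real (card (V n))) + (\<Sum>g\<in>B - {0}. real (card (E2 n g)) / real (card (V n)))) \<longlonglongrightarrow> 0 + 0"
      by (intro tendsto_add tendsto_null_sum r1 r2) auto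
    then show "(\<lambda>n. (\<Sum>q\<in>B \<times> B. real (card (E1 n q)) / real (card (V n))) + (\<Sum>g\<in>B - {0}. real (card (E2 n g)) / real (card (V n)))) \<longlonglongrightarrow> 0"
      by simp
  qed
qed

lemma V_nonempty_ev:
  assumes sof: "sofic_approx V \<sigma>"
  shows "\<forall>\<^sub>F n in sequentially. card (V n) > 0"
proof -
  have "(\<lambda>n. real (card {v\<in>V n. \<sigma> n 0 (\<sigma> n 0 v) = \<sigma> n (0 + 0) v}) / real (card (V n))) \<longlonglongrightarrow> 1"
    using sof unfolding sofic_approx_def by blast
  then have "\<forall>\<^sub>F n in sequentially. real (card {v\<in>V n. \<sigma> n 0 (\<sigma> n 0 v) = \<sigma> n (0 + 0) v}) / real (card (V n)) > 1/2"
    by (rule order_tendstoD) simp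
  then show ?thesis by eventually_elim (auto intro: Nat.gr0I)
qed

fun walkf :: "(nat \<Rightarrow> 'g \<Rightarrow> 'v \<Rightarrow> 'v) \<Rightarrow> (nat \<Rightarrow> 'v set) \<Rightarrow> nat \<Rightarrow> ('g \<times> bool) list \<Rightarrow> 'v \<Rightarrow> 'v" where
  "walkf \<sigma> V n [] x = x"
| "walkf \<sigma> V n (st # ls) x = (if snd st then \<sigma> n (fst st) (walkf \<sigma> V n ls x)
      else inv_into (V n) (\<sigma> n (fst st)) (walkf \<sigma> V n ls x))"

lemma ball_card:
  fixes S :: "'g set"
  assumes bij: "\<forall>g. bij_betw (\<sigma> n g) (V n) (V n)" and fS: "finite S"
  shows "card {y\<in>V n. dE_le S V \<sigma> n x y M} \<le> card {ls :: ('g \<times> bool) list. set ls \<subseteq> S \<times> UNIV \<and> length ls \<le> M}"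
proof -
  let ?L = "{ls :: ('g \<times> bool) list. set ls \<subseteq> S \<times> UNIV \<and> length ls \<le> M}"
  have fL: "finite ?L" using fS by (intro finite_lists_length_le) auto
  have "{y\<in>V n. dE_le S V \<sigma> n x y M} \<subseteq> (\<lambda>ls. walkf \<sigma> V n ls x) ` ?L"
  proof
    fix y assume "y \<in> {y\<in>V n. dE_le S V \<sigma> n x y M}"
    then obtain p k where p: "k \<le> M" "p 0 = x" "p k = y" "\<forall>i\<le>k. p i \<in> V n"
      "\<forall>i<k. \<exists>s\<in>S. p (Suc i) = \<sigma> n s (p i) \<or> p i = \<sigma> n s (p (Suc i))"
      unfolding dE_le_def by blast
    have "i \<le> k \<Longrightarrow> \<exists>ls. set ls \<subseteq> S \<times> UNIV \<and> length ls = i \<and> p i = walkf \<sigma> V n ls x" for i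
    proof (induction i)
      case 0
      then show ?case using p(2) by (intro exI[of _ "[]"]) simp
    next
      case (Suc i)
      then obtain ls where ls: "set ls \<subseteq> S \<times> UNIV" "length ls = i" "p i = walkf \<sigma> V n ls x" by auto
      obtain s where s: "s \<in> S" "p (Suc i) = \<sigma> n s (p i) \<or> p i = \<sigma> n s (p (Suc i))"
        using p(5) Suc.prems by (meson Suc_le_lessD)
      show ?case
      proof (cases "p (Suc i) = \<sigma> n s (p i)")
        case True
        then show ?thesis using ls s by (intro exI[of _ "(s, True) # ls"]) auto
      next
        case False
        then have e: "p i = \<sigma> n s (p (Suc i))" using s by blast
        have inj: "inj_on (\<sigma> n s) (V n)" using bij bij_betw_imp_inj_on by blast
        have "p (Suc i) \<in> V n" using p(4) Suc.prems by simp
        then have "inv_into (V n) (\<sigma> n s) (p i) = p (Suc i)" using e inv_into_f_f[OF inj] by simp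
        then show ?thesis using ls s by (intro exI[of _ "(s, False) # ls"]) auto
      qed
    qed
    from this[of k] obtain ls where "set ls \<subseteq> S \<times> UNIV" "length ls = k" "y = walkf \<sigma> V n ls x"
      using p(3) by auto
    then show "y \<in> (\<lambda>ls. walkf \<sigma> V n ls x) ` ?L" using p(1) by auto
  qed
  then have "card {y\<in>V n. dE_le S V \<sigma> n x y M} \<le> card ((\<lambda>ls. walkf \<sigma> V n ls x) ` ?L)"
    using fL by (intro card_mono) auto
  also have "\<dots> \<le> card ?L" by (rule card_image_le[OF fL])
  finally show ?thesis .
qed



lemma ballS_mono: "R \<le> R' \<Longrightarrow> ballS S R \<subseteq> ballS S R'"
  by (auto simp: ballS_def)

lemma compare:
  fixes S :: "'g::group_add set" and V :: "nat \<Rightarrow> 'v set" and \<sigma> :: "nat \<Rightarrow> 'g \<Rightarrow> 'v \<Rightarrow> 'v"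
    and H :: "('g \<Rightarrow> 'x::topological_space) \<Rightarrow> 'g \<Rightarrow> 'g \<Rightarrow> complex"
    and Hn :: "nat \<Rightarrow> ('v \<Rightarrow> 'x) \<Rightarrow> 'v \<Rightarrow> 'v \<Rightarrow> complex"
  assumes fS: "finite S" and gen: "generates S" and sym: "\<forall>s\<in>S. - s \<in> S"
    and bij: "\<forall>g. bij_betw (\<sigma> n g) (V n) (V n)"
    and co: "continuous_operator S M H"
    and hb: "(\<forall>n g h. \<forall>v\<in>V n. \<sigma> n (g + h) v = \<sigma> n g (\<sigma> n h v)) \<or> bounded_interaction S M H"
    and ia: "induced_approx S V \<sigma> M H Hn"
    and \<rho>: "\<rho> \<in> PiE (V n) (\<lambda>_. UNIV)"
    and l: "loc S V \<sigma> n T v" and T: "d * M + 4 * M + 2 \<le> T" and deg: "degree p \<le> d"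
  shows "polymat (V n) (Hn n \<rho>) p v v = polymat UNIV (H (Pi_sh \<sigma> n v \<rho>)) p 0 0"
proof -
  have v: "v \<in> V n" and A1: "\<And>h a. wlen S h + wlen S a \<le> T \<Longrightarrow> \<sigma> n h (\<sigma> n a v) = \<sigma> n (h + a) v"
    and A2: "\<And>a b. wlen S a \<le> T \<Longrightarrow> wlen S b \<le> T \<Longrightarrow> \<sigma> n a v = \<sigma> n b v \<Longrightarrow> a = b"
    using l unfolding loc_def by blast+
  define \<psi> where "\<psi> a = \<sigma> n a v" for a
  define \<omega> where "\<omega> = Pi_sh \<sigma> n v \<rho>"
  define J2 where "J2 = ballS S (d * M)"
  define J1 where "J1 = \<psi> ` J2"
  have psi_in: "\<psi> a \<in> V n" for a unfolding \<psi>_def by (rule sig_in[where S=S and V=V and \<sigma>=\<sigma> and n=n, OF gen sym bij v])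
  have psi0: "\<psi> 0 = v" unfolding \<psi>_def by (rule loc_0[where S=S and V=V and \<sigma>=\<sigma> and n=n, OF gen sym bij l])
  have ia0: "dE_le S V \<sigma> n x y M" if "x \<in> V n" "y \<in> V n" "Hn n \<rho> x y \<noteq> 0" for x y
    using ia \<rho> that unfolding induced_approx_def by blast
  have ia1: "Hn n \<rho> w v' = H (Pi_sh \<sigma> n w \<rho>) 0 g"
    if "good S V \<sigma> n (4 * M) w" "v' \<in> ballE S V \<sigma> n w M" "g \<in> ballS S M" "\<sigma> n g w = v'" for w v' g
    using ia \<rho> that unfolding induced_approx_def by blast
  have band: "H \<omega>' x y = 0" if "wlen S (x - y) > M" for \<omega>' x y
    using co that unfolding continuous_operator_def by blast
  have trans: "H \<omega>' (x + g) (y + g) = H (shift g \<omega>') x y" for \<omega>' x y g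
    using co unfolding continuous_operator_def by blast
  have lx: "loc S V \<sigma> n (4 * M + 2) (\<psi> a)" if "a \<in> J2" for a
    unfolding \<psi>_def using that T by (intro loc_shift[where S=S and V=V and \<sigma>=\<sigma> and n=n, OF gen sym bij l]) (auto simp: J2_def ballS_def)
  have wsym: "wlen S (x - y) = wlen S (y - x)" for x y
    using wlen_uminus[OF gen sym, of "y - x"] by (simp add: minus_diff_eq)
  have ent: "Hn n \<rho> (\<psi> a) (\<psi> b) = H \<omega> a b" if a: "a \<in> J2" and b: "b \<in> J2" for a b
  proof -
    have wa: "wlen S a \<le> d * M" and wb: "wlen S b \<le> d * M" using a b by (auto simp: J2_def ballS_def)
    show ?thesis
    proof (cases "wlen S (b - a) \<le> M")
      case True
      define h where "h = b - a"
      have ha: "h + a = b" by (simp add: h_def)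
      have sh: "\<sigma> n h (\<psi> a) = \<psi> b" unfolding \<psi>_def using A1[of h a] True wa T ha h_def by simp
      have inb: "\<psi> b \<in> ballE S V \<sigma> n (\<psi> a) M"
        unfolding ballE_def using psi_in word_walk2[where S=S and V=V and \<sigma>=\<sigma> and n=n, OF gen sym bij lx[OF a], of h M] True sh h_def by auto
      have gd: "good S V \<sigma> n (4 * M) (\<psi> a)" by (rule good_loc[where S=S and V=V and \<sigma>=\<sigma> and n=n, OF gen sym bij lx[OF a]]) simp
      have hM: "h \<in> ballS S M" using True h_def by (simp add: ballS_def)
      have e1: "Hn n \<rho> (\<psi> a) (\<psi> b) = H (Pi_sh \<sigma> n (\<psi> a) \<rho>) 0 h" by (rule ia1[OF gd inb hM sh])
      have e2: "H \<omega> a b = H (shift a \<omega>) 0 h" using trans[of \<omega> 0 a h] ha by simp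
      have agree: "Pi_sh \<sigma> n (\<psi> a) \<rho> k = shift a \<omega> k" if "k \<in> ballS S M" for k
      proof -
        have "\<sigma> n k (\<sigma> n a v) = \<sigma> n (k + a) v" using A1[of k a] that wa T by (auto simp: ballS_def)
        then show ?thesis by (simp add: Pi_sh_def shift_def \<omega>_def \<psi>_def)
      qed
      have "H (Pi_sh \<sigma> n (\<psi> a) \<rho>) 0 h = H (shift a \<omega>) 0 h"
        using hb
      proof
        assume hom: "\<forall>n g h. \<forall>v\<in>V n. \<sigma> n (g + h) v = \<sigma> n g (\<sigma> n h v)"
        have "Pi_sh \<sigma> n (\<psi> a) \<rho> = shift a \<omega>"
          using hom v by (auto simp: Pi_sh_def shift_def \<omega>_def \<psi>_def fun_eq_iff)
        then show ?thesis by simp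
      next
        assume "bounded_interaction S M H"
        then show ?thesis using agree unfolding bounded_interaction_def by blast
      qed
      then show ?thesis using e1 e2 by simp
    next
      case False
      have "H \<omega> a b = 0" using band[where \<omega>'=\<omega> and x=a and y=b] False wsym[of a b] by simp
      moreover have "Hn n \<rho> (\<psi> a) (\<psi> b) = 0"
      proof (rule ccontr)
        assume ne: "Hn n \<rho> (\<psi> a) (\<psi> b) \<noteq> 0"
        have "dE_le S V \<sigma> n (\<psi> a) (\<psi> b) M" by (rule ia0[OF psi_in psi_in ne])
        then obtain h where h: "wlen S h \<le> M" "\<psi> b = \<sigma> n h (\<psi> a)"
          using walk_word[where S=S and V=V and \<sigma>=\<sigma> and n=n, OF gen sym bij lx[OF a]] by fastforce
        have "\<psi> b = \<psi> (h + a)" unfolding \<psi>_def using h A1[of h a] wa T unfolding \<psi>_def by simp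
        moreover have "wlen S (h + a) \<le> T" using wlen_add[OF gen, of h a] h wa T by linarith
        ultimately have "b = h + a" using A2 wb T unfolding \<psi>_def by (metis le_add1 order_trans add_leD1)
        then have "b - a = h" by simp
        then show False using h False by simp
      qed
      ultimately show ?thesis by simp
    qed
  qed
  have fJ2: "finite J2" unfolding J2_def by (rule ballS_finite[OF fS gen])
  have inj: "inj_on \<psi> J2"
    unfolding inj_on_def \<psi>_def using A2 T by (auto simp: J2_def ballS_def)
  have bj: "bij_betw \<psi> J2 J1" using inj by (simp add: J1_def bij_betw_def)
  have zJ2: "0 \<in> J2" by (simp add: J2_def ballS_def)
  have iso: "polymat J1 (Hn n \<rho>) p v v = polymat J2 (H \<omega>) p 0 0"
  proof -
    have "polymat J1 (Hn n \<rho>) p (\<psi> 0) (\<psi> 0) = polymat J2 (H \<omega>) p 0 0"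
      by (rule polymat_iso[OF fJ2 bj]) (use ent zJ2 in auto)
    then show ?thesis using psi0 by simp
  qed
  have locV: "polymat (V n) (Hn n \<rho>) p v v = polymat J1 (Hn n \<rho>) p v v"
  proof (rule polymat_local[where K=d and L="\<lambda>k. \<psi> ` ballS S ((d - k) * M)"])
    show "J1 \<subseteq> V n" using psi_in by (auto simp: J1_def)
    show "\<psi> ` ballS S ((d - k) * M) \<subseteq> J1" if "k < d" for k
      unfolding J1_def J2_def by (intro image_mono ballS_mono) simp
    show "z \<in> \<psi> ` ballS S ((d - k) * M)"
      if k: "k < d" and x: "x \<in> \<psi> ` ballS S ((d - Suc k) * M)" and z: "z \<in> V n" and nz: "Hn n \<rho> x z \<noteq> 0" for k x z
    proof -
      obtain a where a: "wlen S a \<le> (d - Suc k) * M" "x = \<psi> a" using x by (auto simp: ballS_def)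
      have aJ: "a \<in> J2" using a(1) unfolding J2_def ballS_def
        by (metis diff_le_self mult_le_mono1 order_trans mem_Collect_eq)
      have "dE_le S V \<sigma> n x z M" by (rule ia0[OF _ z nz]) (simp add: a psi_in)
      then obtain h where h: "wlen S h \<le> M" "z = \<sigma> n h x"
        using walk_word[where S=S and V=V and \<sigma>=\<sigma> and n=n, OF gen sym bij lx[OF aJ]] a(2) by fastforce
      have dk: "(d - k) * M = M + (d - Suc k) * M" using k by (simp add: Suc_diff_Suc[symmetric])
      have wa2: "wlen S a \<le> d * M" using aJ by (simp add: J2_def ballS_def)
      have "z = \<psi> (h + a)" unfolding \<psi>_def using h a A1[of h a] wa2 T unfolding \<psi>_def by simp
      moreover have "wlen S (h + a) \<le> (d - k) * M" using wlen_add[OF gen, of h a] h a(1) dk by linarith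
      ultimately show ?thesis by (auto simp: ballS_def)
    qed
    show "v \<in> \<psi> ` ballS S ((d - k) * M)" if "k \<le> d" for k
      using psi0 by (auto simp: ballS_def intro!: image_eqI[of _ _ 0])
    show "v \<in> J1" using psi0 zJ2 by (auto simp: J1_def)
    show "degree p \<le> d" by (rule deg)
  qed
  have locG: "polymat UNIV (H \<omega>) p 0 0 = polymat J2 (H \<omega>) p 0 0"
  proof (rule polymat_local[where K=d and L="\<lambda>k. ballS S ((d - k) * M)"])
    show "J2 \<subseteq> UNIV" by simp
    show "ballS S ((d - k) * M) \<subseteq> J2" if "k < d" for k
      unfolding J2_def by (intro ballS_mono) simp
    show "z \<in> ballS S ((d - k) * M)"
      if k: "k < d" and x: "x \<in> ballS S ((d - Suc k) * M)" and nz: "H \<omega> x z \<noteq> 0" for k x z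
    proof -
      have "wlen S (x - z) \<le> M" using band[where \<omega>'=\<omega> and x=x and y=z] nz by (meson not_le)
      then have "wlen S (z - x) \<le> M" using wsym by simp
      moreover have "wlen S z \<le> wlen S (z - x) + wlen S x"
        using wlen_add[OF gen, of "z - x" x] by simp
      moreover have "(d - k) * M = M + (d - Suc k) * M" using k by (simp add: Suc_diff_Suc[symmetric])
      ultimately show ?thesis using x by (auto simp: ballS_def)
    qed
    show "0 \<in> ballS S ((d - k) * M)" for k by (simp add: ballS_def)
    show "0 \<in> J2" by (rule zJ2)
    show "degree p \<le> d" by (rule deg)
  qed
  show ?thesis using locV iso locG by (simp add: \<omega>_def)
qed



lemma compact_fun_UNIV:
  assumes "compact (UNIV :: 'x::topological_space set)"
  shows "compact (UNIV :: ('g \<Rightarrow> 'x) set)"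
proof -
  have "compact_space (euclidean :: 'x topology)" using assms by (simp add: compact_space_def)
  then have "compact_space (product_topology (\<lambda>_::'g. (euclidean :: 'x topology)) UNIV)"
    by (simp add: compact_space_product_topology)
  then have "compact_space (euclidean :: ('g \<Rightarrow> 'x) topology)" by (simp add: euclidean_product_topology)
  then show ?thesis by (simp add: compact_space_def)
qed

lemma H_bound:
  fixes S :: "'g::group_add set" and H :: "('g \<Rightarrow> 'x::metric_space) \<Rightarrow> 'g \<Rightarrow> 'g \<Rightarrow> complex"
  assumes fS: "finite S" and gen: "generates S" and sym: "\<forall>s\<in>S. - s \<in> S"
    and cpt: "compact (UNIV :: 'x set)" and co: "continuous_operator S M H"
  shows "\<exists>B0\<ge>0. \<forall>\<omega> a b. cmod (H \<omega> a b) \<le> B0"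
proof -
  have cU: "compact (UNIV :: ('g \<Rightarrow> 'x) set)" by (rule compact_fun_UNIV[OF cpt])
  have "\<exists>Bc. \<forall>\<omega>. cmod (H \<omega> 0 c) \<le> Bc" for c
  proof -
    have "continuous_on UNIV (\<lambda>\<omega>. H \<omega> 0 c)" using co unfolding continuous_operator_def by blast
    then have "compact ((\<lambda>\<omega>. H \<omega> 0 c) ` UNIV)" using cU by (rule compact_continuous_image)
    then have "bounded ((\<lambda>\<omega>. H \<omega> 0 c) ` UNIV)" by (rule compact_imp_bounded)
    then show ?thesis unfolding bounded_iff by auto
  qed
  then obtain Bc where Bc: "\<And>c \<omega>. cmod (H \<omega> 0 c) \<le> Bc c" by metis
  define B0 where "B0 = (\<Sum>c\<in>ballS S M. \<bar>Bc c\<bar>)"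
  have fB: "finite (ballS S M)" by (rule ballS_finite[OF fS gen])
  have B0: "B0 \<ge> 0" unfolding B0_def by (simp add: sum_nonneg)
  have "cmod (H \<omega> a b) \<le> B0" for \<omega> a b
  proof (cases "wlen S (b - a) \<le> M")
    case True
    have "H \<omega> a b = H \<omega> (0 + a) ((b - a) + a)" by simp
    also have "\<dots> = H (shift a \<omega>) 0 (b - a)" using co unfolding continuous_operator_def by blast
    finally have "cmod (H \<omega> a b) \<le> Bc (b - a)" using Bc by simp
    also have "\<dots> \<le> \<bar>Bc (b - a)\<bar>" by simp
    also have "\<dots> \<le> B0" unfolding B0_def using True fB
      by (intro member_le_sum) (auto simp: ballS_def)
    finally show ?thesis .
  next
    case False
    have "wlen S (a - b) = wlen S (b - a)"
      using wlen_uminus[OF gen sym, of "b - a"] by (simp add: minus_diff_eq)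
    then have "wlen S (a - b) > M" using False by simp
    then have "H \<omega> a b = 0" using co unfolding continuous_operator_def by blast
    then show ?thesis using B0 by simp
  qed
  then show ?thesis using B0 by blast
qed

lemma locG_lemma:
  fixes S :: "'g::group_add set" and A :: "'g \<Rightarrow> 'g \<Rightarrow> complex"
  assumes gen: "generates S" and sym: "\<forall>s\<in>S. - s \<in> S"
    and band: "\<And>x y. wlen S (x - y) > M \<Longrightarrow> A x y = 0"
    and deg: "degree p \<le> d"
  shows "polymat UNIV A p 0 0 = polymat (ballS S (d * M)) A p 0 0"
proof (rule polymat_local[where K=d and L="\<lambda>k. ballS S ((d - k) * M)"])
  have wsym: "wlen S (x - y) = wlen S (y - x)" for x y
    using wlen_uminus[OF gen sym, of "y - x"] by (simp add: minus_diff_eq)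
  show "ballS S (d * M) \<subseteq> UNIV" by simp
  show "ballS S ((d - k) * M) \<subseteq> ballS S (d * M)" if "k < d" for k
    by (intro ballS_mono) simp
  show "z \<in> ballS S ((d - k) * M)"
    if k: "k < d" and x: "x \<in> ballS S ((d - Suc k) * M)" and nz: "A x z \<noteq> 0" for k x z
  proof -
    have "wlen S (x - z) \<le> M" using band[of x z] nz by (meson not_le)
    then have "wlen S (z - x) \<le> M" using wsym by simp
    moreover have "wlen S z \<le> wlen S (z - x) + wlen S x"
      using wlen_add[OF gen, of "z - x" x] by simp
    moreover have "(d - k) * M = M + (d - Suc k) * M" using k by (simp add: Suc_diff_Suc[symmetric])
    ultimately show ?thesis using x by (auto simp: ballS_def)
  qed
  show "0 \<in> ballS S ((d - k) * M)" for k by (simp add: ballS_def)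
  show "0 \<in> ballS S (d * M)" by (simp add: ballS_def)
  show "degree p \<le> d" by (rule deg)
qed

lemma SBP_G:
  fixes S :: "'g::group_add set" and H :: "('g \<Rightarrow> 'x::metric_space) \<Rightarrow> 'g \<Rightarrow> 'g \<Rightarrow> complex"
  assumes fS: "finite S" and gen: "generates S" and sym: "\<forall>s\<in>S. - s \<in> S"
    and co: "continuous_operator S M H"
    and B0: "B0 \<ge> 0" "\<And>\<omega> a b. cmod (H \<omega> a b) \<le> B0"
    and D: "card (ballS S M) \<le> D"
  shows "SBP UNIV (H \<omega>) 0 0 (B0 * real D)"
  unfolding SBP_def
proof (intro allI impI)
  fix p :: "real poly" and \<epsilon> :: real
  assume pb: "\<forall>t. \<bar>t\<bar> \<le> B0 * real D \<longrightarrow> \<bar>poly p t\<bar> \<le> \<epsilon>"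
  let ?J = "ballS S (degree p * M)"
  have band: "\<And>x y. wlen S (x - y) > M \<Longrightarrow> H \<omega> x y = 0" using co unfolding continuous_operator_def by blast
  have herm: "\<And>x y. H \<omega> x y = cnj (H \<omega> y x)" using co unfolding continuous_operator_def by blast
  have fJ: "finite ?J" by (rule ballS_finite[OF fS gen])
  have fM: "finite (ballS S M)" by (rule ballS_finite[OF fS gen])
  have eq: "polymat UNIV (H \<omega>) p 0 0 = polymat ?J (H \<omega>) p 0 0"
    using locG_lemma[OF gen sym band, where p=p and d="degree p"] by simp
  have ob: "opbound ?J (H \<omega>) (B0 * real D)"
  proof (rule schur_opbound[OF fJ B0(1)])
    show "cmod (H \<omega> x y) \<le> B0" for x y by (rule B0(2))
    show "card {y\<in>?J. H \<omega> x y \<noteq> 0} \<le> D" if "x \<in> ?J" for x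
    proof -
      have sub: "{y\<in>?J. H \<omega> x y \<noteq> 0} \<subseteq> (\<lambda>c. - c + x) ` ballS S M"
      proof (rule subsetI)
        fix y assume y: "y \<in> {y\<in>?J. H \<omega> x y \<noteq> 0}"
        have "\<not> wlen S (x - y) > M"
        proof
          assume "wlen S (x - y) > M"
          then have "H \<omega> x y = 0" by (rule band)
          with y show False by simp
        qed
        then have w: "x - y \<in> ballS S M" by (simp add: ballS_def)
        have e: "y = - (x - y) + x" by (simp add: minus_diff_eq)
        show "y \<in> (\<lambda>c. - c + x) ` ballS S M" using rev_image_eqI[where f="\<lambda>c. - c + x", OF w e] .
      qed
      have "card {y\<in>?J. H \<omega> x y \<noteq> 0} \<le> card ((\<lambda>c. - c + x) ` ballS S M)"
        by (rule card_mono[OF finite_imageI[OF fM] sub])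
      also have "\<dots> \<le> card (ballS S M)" by (rule card_image_le[OF fM])
      finally show ?thesis using D by linarith
    qed
    show "card {x\<in>?J. H \<omega> x y \<noteq> 0} \<le> D" if "y \<in> ?J" for y
    proof -
      have sub: "{x\<in>?J. H \<omega> x y \<noteq> 0} \<subseteq> (\<lambda>c. c + y) ` ballS S M"
      proof (rule subsetI)
        fix x assume x: "x \<in> {x\<in>?J. H \<omega> x y \<noteq> 0}"
        have "\<not> wlen S (x - y) > M"
        proof
          assume "wlen S (x - y) > M"
          then have "H \<omega> x y = 0" by (rule band)
          with x show False by simp
        qed
        then have w: "x - y \<in> ballS S M" by (simp add: ballS_def)
        have e: "x = (x - y) + y" by simp
        show "x \<in> (\<lambda>c. c + y) ` ballS S M" using rev_image_eqI[where f="\<lambda>c. c + y", OF w e] .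
      qed
      have "card {x\<in>?J. H \<omega> x y \<noteq> 0} \<le> card ((\<lambda>c. c + y) ` ballS S M)"
        by (rule card_mono[OF finite_imageI[OF fM] sub])
      also have "\<dots> \<le> card (ballS S M)" by (rule card_image_le[OF fM])
      finally show ?thesis using D by linarith
    qed
  qed
  have hm: "herm ?J (H \<omega>)" unfolding herm_def using herm by blast
  have z: "0 \<in> ?J" by (simp add: ballS_def)
  have rpos: "B0 * real D \<ge> 0" using B0 by simp
  show "cmod (polymat UNIV (H \<omega>) p 0 0) \<le> \<epsilon>"
    unfolding eq by (rule spec_bound[OF fJ hm ob rpos z z]) (use pb in auto)
qed

lemma SBP_V:
  fixes S :: "'g::group_add set" and H :: "('g \<Rightarrow> 'x::metric_space) \<Rightarrow> 'g \<Rightarrow> 'g \<Rightarrow> complex"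
    and Hn :: "nat \<Rightarrow> ('v \<Rightarrow> 'x) \<Rightarrow> 'v \<Rightarrow> 'v \<Rightarrow> complex"
  assumes fS: "finite S" and fV: "finite (V n)" and bij: "\<forall>g. bij_betw (\<sigma> n g) (V n) (V n)"
    and ia: "induced_approx S V \<sigma> M H Hn" and \<rho>: "\<rho> \<in> PiE (V n) (\<lambda>_. UNIV)"
    and B0: "B0 \<ge> 0" "\<And>\<omega> a b. cmod (H \<omega> a b) \<le> B0"
    and D: "card {ls :: ('g \<times> bool) list. set ls \<subseteq> S \<times> UNIV \<and> length ls \<le> M} \<le> D"
    and v: "v \<in> V n"
  shows "SBP (V n) (Hn n \<rho>) v v (B0 * real D)"
  unfolding SBP_def
proof (intro allI impI)
  fix p :: "real poly" and \<epsilon> :: real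
  assume pb: "\<forall>t. \<bar>t\<bar> \<le> B0 * real D \<longrightarrow> \<bar>poly p t\<bar> \<le> \<epsilon>"
  have herm0: "\<And>x y. x \<in> V n \<Longrightarrow> y \<in> V n \<Longrightarrow> Hn n \<rho> x y = cnj (Hn n \<rho> y x)"
    using ia \<rho> unfolding induced_approx_def by blast
  have ia0: "dE_le S V \<sigma> n x y M" if "x \<in> V n" "y \<in> V n" "Hn n \<rho> x y \<noteq> 0" for x y
    using ia \<rho> that unfolding induced_approx_def by blast
  have rng: "Hn n \<rho> x y \<in> {H \<omega> a b | \<omega> a b. True} \<union> {0}" if "x \<in> V n" "y \<in> V n" for x y
    using ia \<rho> that unfolding induced_approx_def by blast
  have ob: "opbound (V n) (Hn n \<rho>) (B0 * real D)"
  proof (rule schur_opbound[OF fV B0(1)])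
    show "cmod (Hn n \<rho> x y) \<le> B0" if "x \<in> V n" "y \<in> V n" for x y
      using rng[OF that] B0 by auto
    show "card {y\<in>V n. Hn n \<rho> x y \<noteq> 0} \<le> D" if x: "x \<in> V n" for x
    proof -
      have "{y\<in>V n. Hn n \<rho> x y \<noteq> 0} \<subseteq> {y\<in>V n. dE_le S V \<sigma> n x y M}" using ia0 x by auto
      then have "card {y\<in>V n. Hn n \<rho> x y \<noteq> 0} \<le> card {y\<in>V n. dE_le S V \<sigma> n x y M}"
        using fV by (intro card_mono) auto
      also have "\<dots> \<le> D" using ball_card[where \<sigma>=\<sigma> and n=n and V=V and x=x and M=M, OF bij fS] D by simp
      finally show ?thesis .
    qed
    show "card {x\<in>V n. Hn n \<rho> x y \<noteq> 0} \<le> D" if y: "y \<in> V n" for y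
    proof -
      have "{x\<in>V n. Hn n \<rho> x y \<noteq> 0} \<subseteq> {x\<in>V n. dE_le S V \<sigma> n y x M}"
      proof
        fix x assume "x \<in> {x\<in>V n. Hn n \<rho> x y \<noteq> 0}"
        then have x: "x \<in> V n" "Hn n \<rho> x y \<noteq> 0" by auto
        then have "Hn n \<rho> y x \<noteq> 0" using herm0[OF x(1) y] by auto
        then show "x \<in> {x\<in>V n. dE_le S V \<sigma> n y x M}" using ia0[OF y x(1)] x by auto
      qed
      then have "card {x\<in>V n. Hn n \<rho> x y \<noteq> 0} \<le> card {x\<in>V n. dE_le S V \<sigma> n y x M}"
        using fV by (intro card_mono) auto
      also have "\<dots> \<le> D" using ball_card[where \<sigma>=\<sigma> and n=n and V=V and x=y and M=M, OF bij fS] D by simp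
      finally show ?thesis .
    qed
  qed
  have hm: "herm (V n) (Hn n \<rho>)" unfolding herm_def using herm0 by blast
  have rpos: "B0 * real D \<ge> 0" using B0 by simp
  show "cmod (polymat (V n) (Hn n \<rho>) p v v) \<le> \<epsilon>"
    by (rule spec_bound[OF fV hm ob rpos v v]) (use pb in auto)
qed



lemma SBP_D: "SBP I A x y r \<Longrightarrow> (\<And>t. \<bar>t\<bar> \<le> r \<Longrightarrow> \<bar>poly p t\<bar> \<le> \<epsilon>) \<Longrightarrow> cmod (polymat I A p x y) \<le> \<epsilon>"
  unfolding SBP_def by blast

lemma tri3: "cmod (a + b - c) \<le> cmod a + cmod b + cmod (c::complex)"
proof -
  have "cmod (a + b - c) \<le> cmod (a + b) + cmod c" by (rule norm_triangle_ineq4)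
  also have "cmod (a + b) \<le> cmod a + cmod b" by (rule norm_triangle_ineq)
  finally show ?thesis by simp
qed

theorem mainTheorem17:
  fixes S :: "'g::group_add set"
    and V :: "nat \<Rightarrow> 'v set"
    and \<sigma> :: "nat \<Rightarrow> 'g \<Rightarrow> 'v \<Rightarrow> 'v"
    and M :: nat
    and H :: "('g \<Rightarrow> 'x::metric_space) \<Rightarrow> 'g \<Rightarrow> 'g \<Rightarrow> complex"
    and Hn :: "nat \<Rightarrow> ('v \<Rightarrow> 'x) \<Rightarrow> 'v \<Rightarrow> 'v \<Rightarrow> complex"
    and f :: "real \<Rightarrow> real"
  assumes "finite S" and "\<forall>s\<in>S. - s \<in> S" and "0 \<notin> S" and "generates S"
    and "compact (UNIV :: 'x set)"
    and "sofic_approx V \<sigma>"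
    and "continuous_operator S M H"
    and "(\<forall>n g h. \<forall>v\<in>V n. \<sigma> n (g + h) v = \<sigma> n g (\<sigma> n h v)) \<or> bounded_interaction S M H"
    and "induced_approx S V \<sigma> M H Hn"
    and "continuous_on UNIV f"
  shows "(\<lambda>n. SUP \<rho>\<in>PiE (V n) (\<lambda>_. UNIV).
            ereal (cmod ((\<Sum>v\<in>V n. fcalc (V n) (Hn n \<rho>) f v v
                                    - fcalc UNIV (H (Pi_sh \<sigma> n v \<rho>)) f 0 0)
                         / of_nat (card (V n))))) \<longlonglongrightarrow> 0"
proof -
  note fS = assms(1) and sym = assms(2) and gen = assms(4) and cpt = assms(5) and sof = assms(6)
    and co = assms(7) and hb = assms(8) and ia = assms(9) and fc = assms(10)
  have fin: "\<And>n. finite (V n)" using sof by (simp add: sofic_approx_def)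
  have bij: "\<And>n. \<forall>g. bij_betw (\<sigma> n g) (V n) (V n)" using sof by (simp add: sofic_approx_def)
  obtain B0 where B0: "B0 \<ge> 0" "\<And>\<omega> a b. cmod (H \<omega> a b) \<le> B0"
    using H_bound[OF fS gen sym cpt co] by blast
  define D where "D = max (card (ballS S M)) (card {ls :: ('g \<times> bool) list. set ls \<subseteq> S \<times> UNIV \<and> length ls \<le> M})"
  define r0 where "r0 = B0 * real D"
  have r0: "r0 \<ge> 0" unfolding r0_def using B0 by simp
  have sbG: "SBP UNIV (H \<omega>) 0 0 r0" for \<omega>
    unfolding r0_def by (rule SBP_G[OF fS gen sym co B0]) (simp add: D_def)
  have sbV: "SBP (V n) (Hn n \<rho>) v v r0" if "\<rho> \<in> PiE (V n) (\<lambda>_. UNIV)" "v \<in> V n" for n \<rho> v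
    unfolding r0_def by (rule SBP_V[OF fS fin bij ia that(1) B0 _ that(2)]) (simp add: D_def)
  obtain Fb where Fb: "\<And>t. \<bar>t\<bar> \<le> r0 \<Longrightarrow> \<bar>f t\<bar> \<le> Fb"
  proof -
    have "continuous_on {-r0..r0} f" using fc continuous_on_subset by blast
    then have "compact (f ` {-r0..r0})" by (rule compact_continuous_image) simp
    then have "bounded (f ` {-r0..r0})" by (rule compact_imp_bounded)
    then obtain B where "\<forall>y\<in>f ` {-r0..r0}. norm y \<le> B" unfolding bounded_iff by blast
    then have "\<And>t. \<bar>t\<bar> \<le> r0 \<Longrightarrow> \<bar>f t\<bar> \<le> B" by (auto simp: abs_le_iff)
    then show ?thesis using that by blast
  qed
  have Fb0: "Fb \<ge> 0" using Fb[of 0] r0 by simp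
  define Q where "Q n \<rho> = cmod ((\<Sum>v\<in>V n. fcalc (V n) (Hn n \<rho>) f v v
                                    - fcalc UNIV (H (Pi_sh \<sigma> n v \<rho>)) f 0 0)
                         / of_nat (card (V n)))" for n \<rho>
  have key: "\<forall>\<^sub>F n in sequentially. \<forall>\<rho>\<in>PiE (V n) (\<lambda>_. UNIV :: 'x set). Q n \<rho> \<le> 3 * \<epsilon>" if eps: "\<epsilon> > 0" for \<epsilon>
  proof -
    obtain p where p: "\<forall>t. \<bar>t\<bar> \<le> r0 \<longrightarrow> \<bar>poly p t - f t\<bar> < \<epsilon>"
      using weier_poly[OF fc eps] by blast
    define d where "d = degree p"
    define T where "T = d * M + 4 * M + 2"
    define Cb where "Cb = 2 * (Fb + \<epsilon>)"
    have Cb0: "Cb \<ge> 0" using Fb0 eps by (simp add: Cb_def)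
    have pf: "\<And>t. \<bar>t\<bar> \<le> r0 \<Longrightarrow> \<bar>poly p t - f t\<bar> \<le> \<epsilon>" using p by (simp add: less_imp_le)
    have pb: "\<And>t. \<bar>t\<bar> \<le> r0 \<Longrightarrow> \<bar>poly p t\<bar> \<le> Fb + \<epsilon>"
    proof -
      fix t :: real assume t: "\<bar>t\<bar> \<le> r0"
      have "\<bar>poly p t - f t\<bar> \<le> \<epsilon>" "\<bar>f t\<bar> \<le> Fb" using pf[OF t] Fb[OF t] by auto
      then show "\<bar>poly p t\<bar> \<le> Fb + \<epsilon>" by linarith
    qed
    have ev1: "\<forall>\<^sub>F n in sequentially. card (V n) > 0" by (rule V_nonempty_ev[OF sof])
    have "(\<lambda>n. real (card {v\<in>V n. \<not> SN S V \<sigma> n T v}) / real (card (V n))) \<longlonglongrightarrow> 0"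
      by (rule SN_density[OF sof fS gen])
    moreover have "\<epsilon> / (Cb + 1) > 0" using eps Cb0 by simp
    ultimately have ev2: "\<forall>\<^sub>F n in sequentially. real (card {v\<in>V n. \<not> SN S V \<sigma> n T v}) / real (card (V n)) < \<epsilon> / (Cb + 1)"
      by (rule order_tendstoD)
    show ?thesis using ev1 ev2
    proof eventually_elim
      case (elim n)
      show ?case
      proof
        fix \<rho> assume \<rho>: "\<rho> \<in> PiE (V n) (\<lambda>_. UNIV :: 'x set)"
        define tm where "tm v = fcalc (V n) (Hn n \<rho>) f v v - fcalc UNIV (H (Pi_sh \<sigma> n v \<rho>)) f 0 0" for v
        have tmb: "cmod (tm v) \<le> 2 * \<epsilon> + (if SN S V \<sigma> n T v then 0 else Cb)" if v: "v \<in> V n" for v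
        proof -
          let ?fV = "fcalc (V n) (Hn n \<rho>) f v v" and ?fG = "fcalc UNIV (H (Pi_sh \<sigma> n v \<rho>)) f 0 0"
          let ?pV = "polymat (V n) (Hn n \<rho>) p v v" and ?pG = "polymat UNIV (H (Pi_sh \<sigma> n v \<rho>)) p 0 0"
          have e1: "cmod (?fV - ?pV) \<le> \<epsilon>" by (rule fcalc_char[OF fc sbV[OF \<rho> v] pf])
          have e3: "cmod (?fG - ?pG) \<le> \<epsilon>" by (rule fcalc_char[OF fc sbG pf])
          have m1: "cmod ?pV \<le> Fb + \<epsilon>" by (rule SBP_D[OF sbV[OF \<rho> v] pb])
          have m2: "cmod ?pG \<le> Fb + \<epsilon>" by (rule SBP_D[OF sbG pb])
          have tm_eq: "tm v = (?fV - ?pV) + (?pV - ?pG) - (?fG - ?pG)" by (simp add: tm_def)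
          have tri: "cmod (tm v) \<le> cmod (?fV - ?pV) + cmod (?pV - ?pG) + cmod (?fG - ?pG)"
            unfolding tm_eq by (rule tri3)
          show ?thesis
          proof (cases "SN S V \<sigma> n T v")
            case True
            have l: "loc S V \<sigma> n T v" by (rule SN_loc[where S=S and V=V and \<sigma>=\<sigma> and n=n, OF gen sym bij True])
            have "?pV = ?pG"
              by (rule compare[where d=d, OF fS gen sym bij co hb ia \<rho> l]) (simp_all add: T_def d_def)
            then show ?thesis using tri e1 e3 True by simp
          next
            case False
            have "cmod (?pV - ?pG) \<le> cmod ?pV + cmod ?pG" by (rule norm_triangle_ineq4)
            then show ?thesis using tri e1 e3 m1 m2 False by (simp add: Cb_def)
          qed
        qed
        have cV: "real (card (V n)) > 0" using elim(1) by simp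
        have "cmod (\<Sum>v\<in>V n. tm v) \<le> (\<Sum>v\<in>V n. cmod (tm v))" by (rule norm_sum)
        also have "\<dots> \<le> (\<Sum>v\<in>V n. 2 * \<epsilon> + (if SN S V \<sigma> n T v then 0 else Cb))"
          using tmb by (rule sum_mono)
        also have "\<dots> = 2 * \<epsilon> * real (card (V n)) + Cb * real (card {v\<in>V n. \<not> SN S V \<sigma> n T v})"
        proof -
          have "(\<Sum>v\<in>{v\<in>V n. \<not> SN S V \<sigma> n T v}. Cb) = (\<Sum>v\<in>V n. if \<not> SN S V \<sigma> n T v then Cb else 0)"
            by (rule sum.inter_filter[OF fin])
          then have "(\<Sum>v\<in>V n. (if SN S V \<sigma> n T v then 0 else Cb)) = Cb * real (card {v\<in>V n. \<not> SN S V \<sigma> n T v})"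
          proof -
            assume h: "(\<Sum>v\<in>{v\<in>V n. \<not> SN S V \<sigma> n T v}. Cb) = (\<Sum>v\<in>V n. if \<not> SN S V \<sigma> n T v then Cb else 0)"
            have "(\<Sum>v\<in>V n. (if SN S V \<sigma> n T v then 0 else Cb)) = (\<Sum>v\<in>V n. if \<not> SN S V \<sigma> n T v then Cb else 0)"
              by (intro sum.cong) auto
            also have "\<dots> = (\<Sum>v\<in>{v\<in>V n. \<not> SN S V \<sigma> n T v}. Cb)" using h by simp
            also have "\<dots> = Cb * real (card {v\<in>V n. \<not> SN S V \<sigma> n T v})" by simp
            finally show ?thesis .
          qed
          then show ?thesis by (simp add: sum.distrib)
        qed
        finally have sb: "cmod (\<Sum>v\<in>V n. tm v) \<le> 2 * \<epsilon> * real (card (V n)) + Cb * real (card {v\<in>V n. \<not> SN S V \<sigma> n T v})" .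
        have "Q n \<rho> = cmod (\<Sum>v\<in>V n. tm v) / real (card (V n))"
          unfolding Q_def tm_def by (simp add: norm_divide)
        also have "\<dots> \<le> (2 * \<epsilon> * real (card (V n)) + Cb * real (card {v\<in>V n. \<not> SN S V \<sigma> n T v})) / real (card (V n))"
          using sb cV by (simp add: divide_right_mono)
        also have "\<dots> = 2 * \<epsilon> + Cb * (real (card {v\<in>V n. \<not> SN S V \<sigma> n T v}) / real (card (V n)))"
          using cV by (simp add: field_simps)
        also have "\<dots> \<le> 2 * \<epsilon> + Cb * (\<epsilon> / (Cb + 1))"
          using elim(2) Cb0 by (intro add_left_mono mult_left_mono) auto
        also have "\<dots> \<le> 3 * \<epsilon>"
        proof -
          have "Cb * (\<epsilon> / (Cb + 1)) \<le> \<epsilon>" using Cb0 eps by (simp add: field_simps)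
          then show ?thesis by linarith
        qed
        finally show "Q n \<rho> \<le> 3 * \<epsilon>" .
      qed
    qed
  qed
  have Qnn: "Q n \<rho> \<ge> 0" for n \<rho> by (simp add: Q_def)
  have ne: "restrict (\<lambda>_. undefined) (V n) \<in> PiE (V n) (\<lambda>_. (UNIV :: 'x set))" for n by simp
  have "(\<lambda>n. SUP \<rho>\<in>PiE (V n) (\<lambda>_. UNIV). ereal (Q n \<rho>)) \<longlonglongrightarrow> 0"
  proof (rule order_tendstoI)
    fix a :: ereal assume a: "a < 0"
    show "\<forall>\<^sub>F n in sequentially. a < (SUP \<rho>\<in>PiE (V n) (\<lambda>_. UNIV). ereal (Q n \<rho>))"
    proof (rule always_eventually, rule allI)
      fix n
      have "(0::ereal) \<le> ereal (Q n (restrict (\<lambda>_. undefined) (V n)))" using Qnn by simp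
      then have "a < ereal (Q n (restrict (\<lambda>_. undefined) (V n)))" by (rule less_le_trans[OF a])
      also have "\<dots> \<le> (SUP \<rho>\<in>PiE (V n) (\<lambda>_. UNIV). ereal (Q n \<rho>))" by (rule SUP_upper[OF ne])
      finally show "a < (SUP \<rho>\<in>PiE (V n) (\<lambda>_. UNIV). ereal (Q n \<rho>))" .
    qed
  next
    fix a :: ereal assume a: "a > 0"
    obtain z where z: "0 < ereal z" "ereal z < a" using ereal_dense2[OF a] by blast
    have zp: "z > 0" using z(1) by simp
    have "\<forall>\<^sub>F n in sequentially. \<forall>\<rho>\<in>PiE (V n) (\<lambda>_. UNIV :: 'x set). Q n \<rho> \<le> 3 * (z / 6)"
      by (rule key) (simp add: zp)
    then show "\<forall>\<^sub>F n in sequentially. (SUP \<rho>\<in>PiE (V n) (\<lambda>_. UNIV). ereal (Q n \<rho>)) < a"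
    proof eventually_elim
      case (elim n)
      have "(SUP \<rho>\<in>PiE (V n) (\<lambda>_. UNIV). ereal (Q n \<rho>)) \<le> ereal (z / 2)"
        using elim by (intro SUP_least) auto
      also have "\<dots> < ereal z" using zp by simp
      also have "\<dots> < a" by (rule z(2))
      finally show ?case .
    qed
  qed
  then show ?thesis unfolding Q_def .
qed


end
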